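(* For a positive integer $m$, let $C(m)=\{c_1,\dots,c_m\}$ and $v^*_m$ be the vote $c_1\succ c_2\succ\dots\succ c_m$. For integers $0\le k\le m(m-1)/2$ and $j,i\in[m]$, let $T(m,k,j,i)$ be the number of votes over $C(m)$ at swap distance exactly $k$ from $v^*_m$ that rank $c_j$ in position $i$. There is an algorithm that computes $T(m,k,j,i)$ in time polynomial in $m$.
   Context: A vote over a candidate set is a total order (position 1 is the top). The swap distance between two votes is the minimum number of swaps of adjacent candidates needed to transform one into the other (equivalently, the number of candidate pairs ordered differently). *)

theory Defs
  imports Main
begin

text \<open>Candidates c_1..c_m are represented by the naturals 1..m. A vote over C(m) is a
list v (position p, 1-based, holds the candidate v ! (p-1)) with distinct v and
set v = {1..m}.\<close>

definition votes :: "nat \<Rightarrow> nat list set" where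
  "votes m = {v. distinct v \<and> set v = {1..m}}"

definition ref_vote :: "nat \<Rightarrow> nat list" where
  "ref_vote m = [1..<m+1]"

definition prefers :: "nat list \<Rightarrow> nat \<Rightarrow> nat \<Rightarrow> bool" where
  "prefers v a b \<longleftrightarrow> (\<exists>p q. p < q \<and> q < length v \<and> v ! p = a \<and> v ! q = b)"

definition swap_dist :: "nat list \<Rightarrow> nat list \<Rightarrow> nat" where
  "swap_dist v w = card {(a, b). prefers v a b \<and> prefers w b a}"

definition T :: "nat \<Rightarrow> nat \<Rightarrow> nat \<Rightarrow> nat \<Rightarrow> nat" where
  "T m k j i = card {v \<in> votes m. swap_dist v (ref_vote m) = k \<and> v ! (i - 1) = j}"

datatype instr =
    Const nat nat
  | Add nat nat nat
  | Sub nat nat nat      \<comment> \<open>M[r] := M[a] - M[b] (truncated)\<close>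
  | Load nat nat
  | Store nat nat
  | Jz nat nat
  | Jmp nat
  | Halt

type_synonym config = "nat \<times> (nat \<Rightarrow> nat)"

definition halted :: "instr list \<Rightarrow> config \<Rightarrow> bool" where
  "halted P c \<longleftrightarrow> fst c \<ge> length P \<or> P ! fst c = Halt"

fun exec :: "instr \<Rightarrow> config \<Rightarrow> config" where
  "exec (Const r n) (pc, M) = (Suc pc, M(r := n))"
| "exec (Add r a b) (pc, M) = (Suc pc, M(r := M a + M b))"
| "exec (Sub r a b) (pc, M) = (Suc pc, M(r := M a - M b))"
| "exec (Load r a) (pc, M) = (Suc pc, M(r := M (M a)))"
| "exec (Store a r) (pc, M) = (Suc pc, M(M a := M r))"
| "exec (Jz r l) (pc, M) = (if M r = 0 then l else Suc pc, M)"
| "exec (Jmp l) (pc, M) = (l, M)"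
| "exec Halt (pc, M) = (pc, M)"

definition step :: "instr list \<Rightarrow> config \<Rightarrow> config" where
  "step P c = (if halted P c then c else exec (P ! fst c) c)"

definition run :: "instr list \<Rightarrow> nat \<Rightarrow> config \<Rightarrow> config" where
  "run P t c = (step P ^^ t) c"

text \<open>Input (m,k,j,i) in registers 0..3, all other registers 0; output in register 0.\<close>
definition init4 :: "nat \<Rightarrow> nat \<Rightarrow> nat \<Rightarrow> nat \<Rightarrow> config" where
  "init4 m k j i = (0, (\<lambda>_. 0)(0 := m, 1 := k, 2 := j, 3 := i))"

end

theory Submission
  imports Defs
begin


fun invs :: "nat list \<Rightarrow> nat" where
  "invs [] = 0"
| "invs (x # xs) = length (filter (\<lambda>y. y < x) xs) + invs xs"

definition wsum :: "(nat \<Rightarrow> nat) \<Rightarrow> nat \<Rightarrow> nat \<Rightarrow> nat \<Rightarrow> nat" where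
  "wsum A lo hi s = (\<Sum>c\<in>{lo..<hi}. if c \<le> s then A (s - c) else 0)"

fun Gs :: "nat \<Rightarrow> nat \<Rightarrow> nat" where
  "Gs 0 = (\<lambda>s. if s = 0 then 1 else 0)"
| "Gs (Suc n) = wsum (Gs n) 0 (Suc n)"

fun Fn :: "nat \<Rightarrow> nat \<Rightarrow> nat \<Rightarrow> nat \<Rightarrow> nat" where
  "Fn n r 0 = wsum (Gs (n - 1)) r (Suc r)"
| "Fn n r (Suc i) = (\<lambda>s. wsum (Fn (n - 1) (r - 1) i) 0 r s + wsum (Fn (n - 1) r i) (Suc r) n s)"

lemma prefers_Cons:
  "prefers (x # xs) a b \<longleftrightarrow> (a = x \<and> b \<in> set xs) \<or> prefers xs a b"
proof
  assume "prefers (x # xs) a b"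
  then obtain p q where pq: "p < q" "q < length (x # xs)" "(x # xs) ! p = a" "(x # xs) ! q = b"
    unfolding prefers_def by blast
  then obtain q' where q': "q = Suc q'" by (cases q) auto
  show "(a = x \<and> b \<in> set xs) \<or> prefers xs a b"
  proof (cases p)
    case 0
    then show ?thesis using pq q' by (auto simp: in_set_conv_nth)
  next
    case (Suc p')
    then show ?thesis using pq q' unfolding prefers_def by auto
  qed
next
  assume "(a = x \<and> b \<in> set xs) \<or> prefers xs a b"
  then show "prefers (x # xs) a b"
  proof
    assume "a = x \<and> b \<in> set xs"
    then obtain q where "q < length xs" "xs ! q = b" "a = x" by (auto simp: in_set_conv_nth)
    then show ?thesis unfolding prefers_def
      by (rule_tac x=0 in exI, rule_tac x="Suc q" in exI) auto
  next
    assume "prefers xs a b"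
    then obtain p q where "p < q" "q < length xs" "xs ! p = a" "xs ! q = b"
      unfolding prefers_def by blast
    then show ?thesis unfolding prefers_def
      by (rule_tac x="Suc p" in exI, rule_tac x="Suc q" in exI) auto
  qed
qed

lemma prefers_set: "prefers xs a b \<Longrightarrow> a \<in> set xs \<and> b \<in> set xs"
  unfolding prefers_def by auto

lemma card_inv_pairs:
  "distinct v \<Longrightarrow> card {(a, b). prefers v a b \<and> b < a} = invs v"
proof (induction v)
  case Nil
  then show ?case by (simp add: prefers_def)
next
  case (Cons x xs)
  have eq: "{(a, b). prefers (x # xs) a b \<and> b < a}
      = (\<lambda>b. (x, b)) ` {b \<in> set xs. b < x} \<union> {(a, b). prefers xs a b \<and> b < a}"
    by (auto simp: prefers_Cons)
  have fin: "finite {(a, b). prefers xs a b \<and> b < a}"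
  proof (rule finite_subset[of _ "set xs \<times> set xs"])
    show "{(a, b). prefers xs a b \<and> b < a} \<subseteq> set xs \<times> set xs"
    proof
      fix p assume "p \<in> {(a, b). prefers xs a b \<and> b < a}"
      then obtain a b where "p = (a, b)" "prefers xs a b" by blast
      then show "p \<in> set xs \<times> set xs" using prefers_set[of xs a b] by blast
    qed
  qed simp
  have disj: "(\<lambda>b. (x, b)) ` {b \<in> set xs. b < x} \<inter> {(a, b). prefers xs a b \<and> b < a} = {}"
  proof -
    { fix a b assume "a = x" "prefers xs a b"
      then have False using prefers_set[of xs a b] Cons.prems by simp }
    then show ?thesis by blast
  qed
  have c1: "card ((\<lambda>b. (x, b)) ` {b \<in> set xs. b < x}) = length (filter (\<lambda>y. y < x) xs)"
  proof -
    have "card ((\<lambda>b. (x, b)) ` {b \<in> set xs. b < x}) = card {b \<in> set xs. b < x}"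
      by (rule card_image) (auto simp: inj_on_def)
    moreover have "card {b \<in> set xs. b < x} = length (filter (\<lambda>y. y < x) xs)"
      using distinct_card[of "filter (\<lambda>y. y < x) xs"] Cons.prems by simp
    ultimately show ?thesis by simp
  qed
  have fin1: "finite ((\<lambda>b. (x, b)) ` {b \<in> set xs. b < x})" by simp
  have "card {(a, b). prefers (x # xs) a b \<and> b < a} = card ((\<lambda>b. (x, b)) ` {b \<in> set xs. b < x}) + card {(a, b). prefers xs a b \<and> b < a}"
    unfolding eq by (rule card_Un_disjoint[OF fin1 fin disj])
  also have "\<dots> = invs (x # xs)"
    using c1 Cons.IH Cons.prems by simp
  finally show ?case .
qed

lemma prefers_ref:
  assumes "a \<in> {1..m}" "b \<in> {1..m}"
  shows "prefers (ref_vote m) b a \<longleftrightarrow> b < a"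
proof
  assume "prefers (ref_vote m) b a"
  then obtain p q where "p < q" "q < length [1..<m+1]" "[1..<m+1] ! p = b" "[1..<m+1] ! q = a"
    unfolding prefers_def ref_vote_def by blast
  then show "b < a" by (simp del: upt_Suc add: nth_upt)
next
  assume "b < a"
  then show "prefers (ref_vote m) b a"
  proof -
    have "b - 1 < a - 1" "a - 1 < length [1..<m+1]" "[1..<m+1] ! (b - 1) = b" "[1..<m+1] ! (a - 1) = a"
      using assms \<open>b < a\<close> by (simp_all del: upt_Suc add: nth_upt)
    then show ?thesis unfolding prefers_def ref_vote_def by blast
  qed
qed

lemma swap_dist_ref:
  assumes "v \<in> votes m"
  shows "swap_dist v (ref_vote m) = invs v"
proof -
  have sv: "set v = {1..m}" and dv: "distinct v" using assms unfolding votes_def by auto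
  have "{(a, b). prefers v a b \<and> prefers (ref_vote m) b a} = {(a, b). prefers v a b \<and> b < a}"
  proof (rule set_eqI)
    fix p :: "nat \<times> nat"
    obtain a b where p: "p = (a, b)" by (cases p)
    have "prefers v a b \<Longrightarrow> (prefers (ref_vote m) b a \<longleftrightarrow> b < a)"
    proof -
      assume "prefers v a b"
      then have "a \<in> {1..m}" "b \<in> {1..m}" using prefers_set[of v a b] sv by blast+
      then show ?thesis by (rule prefers_ref)
    qed
    then show "p \<in> {(a, b). prefers v a b \<and> prefers (ref_vote m) b a} \<longleftrightarrow> p \<in> {(a, b). prefers v a b \<and> b < a}"
      unfolding p by blast
  qed
  then have "swap_dist v (ref_vote m) = card {(a, b). prefers v a b \<and> b < a}"
    by (simp only: swap_dist_def)
  also have "\<dots> = invs v" by (rule card_inv_pairs[OF dv])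
  finally show ?thesis .
qed

definition perms :: "nat set \<Rightarrow> nat list set" where
  "perms A = {v. distinct v \<and> set v = A}"

lemma finite_perms: "finite A \<Longrightarrow> finite (perms A)"
proof -
  assume "finite A"
  have "perms A \<subseteq> {xs. set xs \<subseteq> A \<and> length xs = card A}"
    unfolding perms_def using distinct_card by fastforce
  moreover have "finite {xs. set xs \<subseteq> A \<and> length xs = card A}"
    using \<open>finite A\<close> by (rule finite_lists_length_eq)
  ultimately show ?thesis by (rule finite_subset)
qed

lemma card_perms_split:
  assumes "finite A" and ne: "A \<noteq> {}"
  shows "card {v \<in> perms A. Q v} = (\<Sum>x\<in>A. card {w \<in> perms (A - {x}). Q (x # w)})"
proof -
  define S where "S = (\<lambda>x. {w \<in> perms (A - {x}). Q (x # w)})"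
  have eq: "{v \<in> perms A. Q v} = (\<Union>x\<in>A. (\<lambda>w. x # w) ` S x)"
  proof (rule set_eqI, rule iffI)
    fix v assume v: "v \<in> {v \<in> perms A. Q v}"
    then have dv: "distinct v" "set v = A" "Q v" unfolding perms_def by auto
    with ne obtain x w where vx: "v = x # w" by (cases v) auto
    have "x \<in> A" using dv vx by auto
    moreover have "w \<in> S x" using dv vx unfolding S_def perms_def by auto
    ultimately show "v \<in> (\<Union>x\<in>A. (\<lambda>w. x # w) ` S x)" using vx by blast
  next
    fix v assume "v \<in> (\<Union>x\<in>A. (\<lambda>w. x # w) ` S x)"
    then obtain x w where "x \<in> A" "w \<in> S x" "v = x # w" by blast
    then show "v \<in> {v \<in> perms A. Q v}" unfolding perms_def S_def by auto
  qed
  have fin: "\<And>x. finite ((\<lambda>w. x # w) ` S x)"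
  proof -
    fix x
    have "finite (perms (A - {x}))" using assms(1) by (intro finite_perms) simp
    then show "finite ((\<lambda>w. x # w) ` S x)" unfolding S_def by simp
  qed
  have disj: "\<forall>x\<in>A. \<forall>y\<in>A. x \<noteq> y \<longrightarrow> (\<lambda>w. x # w) ` S x \<inter> (\<lambda>w. y # w) ` S y = {}"
    by blast
  have ci: "\<And>x. card ((\<lambda>w. x # w) ` S x) = card (S x)"
    by (rule card_image) (simp add: inj_on_def)
  have "card {v \<in> perms A. Q v} = (\<Sum>x\<in>A. card ((\<lambda>w. x # w) ` S x))"
    unfolding eq using fin disj by (intro card_UN_disjoint[OF assms(1)]) auto
  also have "\<dots> = (\<Sum>x\<in>A. card (S x))" using ci by simp
  finally show ?thesis unfolding S_def .
qed

definition rank :: "nat set \<Rightarrow> nat \<Rightarrow> nat" where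
  "rank A x = card {y \<in> A. y < x}"

lemma rank_less:
  assumes "finite A" "x \<in> A" "y \<in> A" "x < y"
  shows "rank A x < rank A y"
proof -
  have "{z \<in> A. z < x} \<subseteq> {z \<in> A. z < y}" using assms by auto
  moreover have "x \<in> {z \<in> A. z < y}" "x \<notin> {z \<in> A. z < x}" using assms by auto
  ultimately have "{z \<in> A. z < x} \<subset> {z \<in> A. z < y}" by blast
  then show ?thesis unfolding rank_def by (rule psubset_card_mono[rotated]) (use assms in simp)
qed

lemma rank_less_iff:
  assumes "finite A" "x \<in> A" "y \<in> A"
  shows "rank A x < rank A y \<longleftrightarrow> x < y"
  using rank_less[OF assms(1,2,3)] rank_less[OF assms(1,3,2)]
  by (metis less_asym linorder_neqE_nat)

lemma rank_inj:
  assumes "finite A" "x \<in> A" "y \<in> A"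
  shows "rank A x = rank A y \<longleftrightarrow> x = y"
  using rank_less[OF assms(1,2,3)] rank_less[OF assms(1,3,2)]
  by (metis less_irrefl linorder_neqE_nat)

lemma rank_lt_card:
  assumes "finite A" "x \<in> A"
  shows "rank A x < card A"
proof -
  have "{z \<in> A. z < x} \<subset> A" using assms by auto
  then show ?thesis unfolding rank_def using assms(1) by (rule psubset_card_mono[rotated])
qed

lemma rank_bij:
  assumes "finite A"
  shows "bij_betw (rank A) A {..<card A}"
proof -
  have inj: "inj_on (rank A) A" using rank_inj[OF assms] by (auto simp: inj_on_def)
  have sub: "rank A ` A \<subseteq> {..<card A}" using rank_lt_card[OF assms] by auto
  have "card (rank A ` A) = card {..<card A}" using card_image[OF inj] by simp
  then have "rank A ` A = {..<card A}" using card_subset_eq[OF _ sub] by simp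
  then show ?thesis using inj unfolding bij_betw_def by simp
qed

lemma rank_remove:
  assumes "finite A" "x \<in> A" "x \<noteq> j"
  shows "rank (A - {x}) j = (if x < j then rank A j - 1 else rank A j)"
proof (cases "x < j")
  case True
  have "{y \<in> A - {x}. y < j} = {y \<in> A. y < j} - {x}" by auto
  then show ?thesis unfolding rank_def using True assms by (simp add: card_Diff_singleton)
next
  case False
  have "{y \<in> A - {x}. y < j} = {y \<in> A. y < j}" using False by auto
  then show ?thesis unfolding rank_def using False by simp
qed

lemma invs_cons:
  assumes "finite A" "x \<in> A" "w \<in> perms (A - {x})"
  shows "invs (x # w) = rank A x + invs w"
proof -
  have dw: "distinct w" and sw: "set w = A - {x}" using assms(3) unfolding perms_def by auto
  have "length (filter (\<lambda>y. y < x) w) = card (set (filter (\<lambda>y. y < x) w))"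
    using distinct_card[of "filter (\<lambda>y. y < x) w"] dw by simp
  also have "set (filter (\<lambda>y. y < x) w) = {y \<in> A. y < x}" using sw by auto
  finally show ?thesis unfolding rank_def by simp
qed

lemma perms_length: "w \<in> perms A \<Longrightarrow> length w = card A"
  unfolding perms_def using distinct_card by fastforce

lemma card_shift:
  "card {w \<in> perms B. c + invs w = s \<and> R w} = (if c \<le> s then card {w \<in> perms B. invs w = s - c \<and> R w} else 0)"
proof (cases "c \<le> s")
  case True
  then have "{w \<in> perms B. c + invs w = s \<and> R w} = {w \<in> perms B. invs w = s - c \<and> R w}" by auto
  then show ?thesis using True by simp
next
  case False
  then have "{w \<in> perms B. c + invs w = s \<and> R w} = {}" by auto
  then show ?thesis using False by simp
qed

lemma wsum_split_sum:
  "(\<Sum>c<n. if c \<le> s then f c else 0) = wsum (\<lambda>t. f (s - t)) 0 n s"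
  unfolding wsum_def by (rule sum.cong) auto

theorem count_G:
  assumes "finite A"
  shows "card {v \<in> perms A. invs v = s} = Gs (card A) s"
  using assms
proof (induction "card A" arbitrary: A s)
  case 0
  then have A: "A = {}" by simp
  have "perms {} = {[]}" unfolding perms_def by auto
  then have e: "{v \<in> perms A. invs v = s} = {v \<in> {[]}. invs v = s}" using A by simp
  show ?case
  proof (cases "s = 0")
    case True
    then have "{v \<in> {[]}. invs v = s} = {[]}" by auto
    then show ?thesis using e A True by simp
  next
    case False
    then have "{v \<in> {[]}. invs v = s} = {}" by auto
    then show ?thesis using e A False by simp
  qed
next
  case (Suc n)
  then have ne: "A \<noteq> {}" by auto
  have "card {v \<in> perms A. invs v = s} = (\<Sum>x\<in>A. card {w \<in> perms (A - {x}). invs (x # w) = s})"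
    by (rule card_perms_split[OF Suc.prems ne])
  also have "\<dots> = (\<Sum>x\<in>A. if rank A x \<le> s then Gs n (s - rank A x) else 0)"
  proof (rule sum.cong[OF refl])
    fix x assume x: "x \<in> A"
    have "{w \<in> perms (A - {x}). invs (x # w) = s} = {w \<in> perms (A - {x}). rank A x + invs w = s \<and> True}"
      using invs_cons[OF Suc.prems x] by auto
    also have "card \<dots> = (if rank A x \<le> s then card {w \<in> perms (A - {x}). invs w = s - rank A x \<and> True} else 0)"
      by (rule card_shift)
    also have "\<dots> = (if rank A x \<le> s then Gs n (s - rank A x) else 0)"
    proof -
      have cx: "n = card (A - {x})" using Suc.hyps(2) Suc.prems x by simp
      have "finite (A - {x})" using Suc.prems by simp
      then show ?thesis using Suc.hyps(1)[OF cx] cx[symmetric] by simp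
    qed
    finally show "card {w \<in> perms (A - {x}). invs (x # w) = s} = \<dots>" .
  qed
  also have "\<dots> = (\<Sum>c<card A. if c \<le> s then Gs n (s - c) else 0)"
    by (rule sum.reindex_bij_betw[OF rank_bij[OF Suc.prems], where g = "\<lambda>c. if c \<le> s then Gs n (s - c) else 0"])
  also have "\<dots> = Gs (card A) s"
    using Suc.hyps(2)[symmetric] by (simp add: wsum_def atLeast0LessThan)
  finally show ?case .
qed

lemma wsum_single: "wsum A r (Suc r) s = (if r \<le> s then A (s - r) else 0)"
  unfolding wsum_def by simp

theorem count_F:
  assumes "finite A" "j \<in> A" "i < card A"
  shows "card {v \<in> perms A. invs v = s \<and> v ! i = j} = Fn (card A) (rank A j) i s"
  using assms
proof (induction i arbitrary: A s)
  case 0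
  have ne: "A \<noteq> {}" using 0 by auto
  have "card {v \<in> perms A. invs v = s \<and> v ! 0 = j} = (\<Sum>x\<in>A. card {w \<in> perms (A - {x}). invs (x # w) = s \<and> (x # w) ! 0 = j})"
    by (rule card_perms_split[OF 0(1) ne])
  also have "\<dots> = (\<Sum>x\<in>A. if x = j then card {w \<in> perms (A - {j}). invs (j # w) = s} else 0)"
    by (rule sum.cong) auto
  also have "\<dots> = card {w \<in> perms (A - {j}). invs (j # w) = s}"
    using 0 by simp
  also have "{w \<in> perms (A - {j}). invs (j # w) = s} = {w \<in> perms (A - {j}). rank A j + invs w = s \<and> True}"
    using invs_cons[OF 0(1,2)] by auto
  also have "card \<dots> = (if rank A j \<le> s then card {w \<in> perms (A - {j}). invs w = s - rank A j \<and> True} else 0)"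
    by (rule card_shift)
  also have "\<dots> = (if rank A j \<le> s then Gs (card A - 1) (s - rank A j) else 0)"
    using count_G[of "A - {j}"] 0 by simp
  also have "\<dots> = Fn (card A) (rank A j) 0 s"
    by (simp add: wsum_single)
  finally show ?case .
next
  case (Suc i)
  have ne: "A \<noteq> {}" using Suc by auto
  define r where "r = rank A j"
  define n where "n = card A"
  define g where "g = (\<lambda>c. if c \<le> s then Fn (n - 1) (if c < r then r - 1 else r) i (s - c) else 0)"
  have "card {v \<in> perms A. invs v = s \<and> v ! Suc i = j} = (\<Sum>x\<in>A. card {w \<in> perms (A - {x}). invs (x # w) = s \<and> (x # w) ! Suc i = j})"
    by (rule card_perms_split[OF Suc.prems(1) ne])
  also have "\<dots> = (\<Sum>x\<in>A. (\<lambda>c. if c = r then 0 else g c) (rank A x))"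
  proof (rule sum.cong[OF refl])
    fix x assume x: "x \<in> A"
    show "card {w \<in> perms (A - {x}). invs (x # w) = s \<and> (x # w) ! Suc i = j} = (\<lambda>c. if c = r then 0 else g c) (rank A x)"
    proof (cases "x = j")
      case True
      have "{w \<in> perms (A - {x}). invs (x # w) = s \<and> (x # w) ! Suc i = j} = {}"
      proof -
        { fix w assume w: "w \<in> perms (A - {x})" "w ! i = j"
          have "length w = card A - 1" using perms_length[OF w(1)] Suc.prems x by simp
          then have "i < length w" using Suc.prems by simp
          then have "j \<in> set w" using w(2) nth_mem by blast
          then have False using w(1) True unfolding perms_def by auto }
        then show ?thesis by auto
      qed
      then have e: "card {w \<in> perms (A - {x}). invs (x # w) = s \<and> (x # w) ! Suc i = j} = 0"
        by (metis card.empty)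
      show ?thesis using e True r_def by simp
    next
      case False
      have rx: "rank A x \<noteq> r" using rank_inj[OF Suc.prems(1) x Suc.prems(2)] False r_def by simp
      have "{w \<in> perms (A - {x}). invs (x # w) = s \<and> (x # w) ! Suc i = j} = {w \<in> perms (A - {x}). rank A x + invs w = s \<and> w ! i = j}"
        using invs_cons[OF Suc.prems(1) x] by auto
      also have "card \<dots> = (if rank A x \<le> s then card {w \<in> perms (A - {x}). invs w = s - rank A x \<and> w ! i = j} else 0)"
        by (rule card_shift)
      also have "\<dots> = (if rank A x \<le> s then Fn (n - 1) (rank (A - {x}) j) i (s - rank A x) else 0)"
        using Suc.IH[of "A - {x}"] Suc.prems x False n_def by simp
      also have "rank (A - {x}) j = (if rank A x < r then r - 1 else r)"
        using rank_remove[OF Suc.prems(1) x False] rank_less_iff[OF Suc.prems(1) x Suc.prems(2)] r_def by simp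
      finally show ?thesis using rx unfolding g_def by simp
    qed
  qed
  also have "\<dots> = (\<Sum>c<n. if c = r then 0 else g c)"
    unfolding n_def by (rule sum.reindex_bij_betw[OF rank_bij[OF Suc.prems(1)]])
  also have "\<dots> = (\<Sum>c\<in>{0..<r}. g c) + (\<Sum>c\<in>{Suc r..<n}. g c)"
  proof -
    have rn: "r < n" using rank_lt_card[OF Suc.prems(1,2)] r_def n_def by simp
    have "(\<Sum>c<n. if c = r then 0 else g c) = (\<Sum>c\<in>{0..<r}. if c = r then 0 else g c) + (\<Sum>c\<in>{r..<n}. if c = r then 0 else g c)"
      unfolding lessThan_atLeast0 using rn by (intro sum.atLeastLessThan_concat[symmetric]) auto
    also have "(\<Sum>c\<in>{r..<n}. if c = r then 0 else g c) = (\<Sum>c\<in>{Suc r..<n}. if c = r then 0 else g c)"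
      using rn by (simp add: sum.atLeast_Suc_lessThan)
    also have "(\<Sum>c\<in>{Suc r..<n}. if c = r then 0 else g c) = (\<Sum>c\<in>{Suc r..<n}. g c)"
      by (rule sum.cong) auto
    also have "(\<Sum>c\<in>{0..<r}. if c = r then 0 else g c) = (\<Sum>c\<in>{0..<r}. g c)"
      by (rule sum.cong) auto
    finally show ?thesis .
  qed
  also have "\<dots> = wsum (Fn (n - 1) (r - 1) i) 0 r s + wsum (Fn (n - 1) r i) (Suc r) n s"
  proof -
    have 1: "(\<Sum>c\<in>{0..<r}. g c) = wsum (Fn (n - 1) (r - 1) i) 0 r s"
      unfolding wsum_def g_def by (rule sum.cong) auto
    have 2: "(\<Sum>c\<in>{Suc r..<n}. g c) = wsum (Fn (n - 1) r i) (Suc r) n s"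
      unfolding wsum_def g_def by (rule sum.cong) auto
    show ?thesis using 1 2 by simp
  qed
  also have "\<dots> = Fn (card A) (rank A j) (Suc i) s"
    using n_def r_def by simp
  finally show ?case .
qed

theorem T_eq:
  assumes "j \<in> {1..m}" "i \<in> {1..m}"
  shows "T m k j i = Fn m (j - 1) (i - 1) k"
proof -
  have "{v \<in> votes m. swap_dist v (ref_vote m) = k \<and> v ! (i - 1) = j} = {v \<in> perms {1..m}. invs v = k \<and> v ! (i - 1) = j}"
    using swap_dist_ref[of _ m] unfolding votes_def perms_def by auto
  moreover have "rank {1..m} j = j - 1"
  proof -
    have "{y \<in> {1..m}. y < j} = {1..<j}" using assms by auto
    then show ?thesis unfolding rank_def by simp
  qed
  moreover have "i - 1 < card {1..m}" using assms by auto
  ultimately show ?thesis unfolding T_def using count_F[of "{1..m}" j "i - 1" k] assms by simp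
qed



datatype com = CI instr | Seq com com (infixr ";;" 60) | While nat com

fun basic :: "instr \<Rightarrow> bool" where
  "basic (Const r n) = True"
| "basic (Add r a b) = True"
| "basic (Sub r a b) = True"
| "basic (Load r a) = True"
| "basic (Store a r) = True"
| "basic _ = False"

fun wfc :: "com \<Rightarrow> bool" where
  "wfc (CI i) = basic i"
| "wfc (Seq a b) = (wfc a \<and> wfc b)"
| "wfc (While r b) = wfc b"

fun len :: "com \<Rightarrow> nat" where
  "len (CI i) = 1"
| "len (Seq a b) = len a + len b"
| "len (While r b) = len b + 2"

fun comp :: "nat \<Rightarrow> com \<Rightarrow> instr list" where
  "comp p (CI i) = [i]"
| "comp p (Seq a b) = comp p a @ comp (p + len a) b"
| "comp p (While r b) = [Jz r (p + len b + 2)] @ comp (Suc p) b @ [Jmp p]"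

lemma length_comp[simp]: "length (comp p c) = len c"
  by (induction c arbitrary: p) auto

definition upd :: "instr \<Rightarrow> (nat \<Rightarrow> nat) \<Rightarrow> (nat \<Rightarrow> nat)" where
  "upd i M = snd (exec i (0, M))"

lemma upd_simps[simp]:
  "upd (Const r n) M = M(r := n)"
  "upd (Add r a b) M = M(r := M a + M b)"
  "upd (Sub r a b) M = M(r := M a - M b)"
  "upd (Load r a) M = M(r := M (M a))"
  "upd (Store a r) M = M(M a := M r)"
  unfolding upd_def by simp_all

lemma exec_basic: "basic i \<Longrightarrow> exec i (pc, M) = (Suc pc, upd i M)"
  by (cases i) (auto simp: upd_def)

inductive bs :: "com \<Rightarrow> (nat \<Rightarrow> nat) \<Rightarrow> (nat \<Rightarrow> nat) \<Rightarrow> nat \<Rightarrow> bool" where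
  bsCI: "bs (CI i) M (upd i M) 1"
| bsSeq: "bs a M M1 t1 \<Longrightarrow> bs b M1 M2 t2 \<Longrightarrow> bs (Seq a b) M M2 (t1 + t2)"
| bsW0: "M r = 0 \<Longrightarrow> bs (While r b) M M 1"
| bsW1: "M r \<noteq> 0 \<Longrightarrow> bs b M M1 t1 \<Longrightarrow> bs (While r b) M1 M2 t2 \<Longrightarrow> bs (While r b) M M2 (t1 + t2 + 2)"

lemma run_add: "run P (t1 + t2) c = run P t2 (run P t1 c)"
  unfolding run_def by (subst add.commute) (simp add: funpow_add)

lemma run_1: "run P 1 c = step P c" "run P (Suc 0) c = step P c"
  unfolding run_def by simp_all

definition code_at :: "instr list \<Rightarrow> nat \<Rightarrow> com \<Rightarrow> bool" where
  "code_at P p c \<longleftrightarrow> p + len c \<le> length P \<and> (\<forall>q < len c. P ! (p + q) = comp p c ! q)"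

lemma code_at_Seq:
  assumes "code_at P p (Seq a b)"
  shows "code_at P p a" "code_at P (p + len a) b"
proof -
  have L: "p + len a + len b \<le> length P"
    and A: "\<And>q. q < len a + len b \<Longrightarrow> P ! (p + q) = (comp p a @ comp (p + len a) b) ! q"
    using assms unfolding code_at_def by auto
  show "code_at P p a" unfolding code_at_def
  proof (intro conjI allI impI)
    fix q assume q: "q < len a"
    have "P ! (p + q) = (comp p a @ comp (p + len a) b) ! q" using A[of q] q by simp
    also have "\<dots> = comp p a ! q" using q by (simp add: nth_append)
    finally show "P ! (p + q) = comp p a ! q" .
  qed (use L in simp)
  show "code_at P (p + len a) b" unfolding code_at_def
  proof (intro conjI allI impI)
    fix q assume q: "q < len b"
    have "P ! (p + (len a + q)) = (comp p a @ comp (p + len a) b) ! (len a + q)" using A[of "len a + q"] q by simp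
    also have "\<dots> = comp (p + len a) b ! q" by (simp add: nth_append)
    finally show "P ! (p + len a + q) = comp (p + len a) b ! q" by (simp add: add.assoc)
  qed (use L in simp)
qed

lemma code_at_While:
  assumes "code_at P p (While r b)"
  shows "code_at P (Suc p) b" "P ! p = Jz r (p + len b + 2)" "P ! (Suc p + len b) = Jmp p"
    "Suc p + len b < length P"
proof -
  have L: "p + (len b + 2) \<le> length P"
    and A: "\<And>q. q < len b + 2 \<Longrightarrow> P ! (p + q) = ([Jz r (p + len b + 2)] @ comp (Suc p) b @ [Jmp p]) ! q"
    using assms unfolding code_at_def by (simp_all only: len.simps comp.simps)
  show "P ! p = Jz r (p + len b + 2)" using A[of 0] by simp
  show "P ! (Suc p + len b) = Jmp p" using A[of "Suc (len b)"] by (simp add: nth_append)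
  show "Suc p + len b < length P" using L by simp
  show "code_at P (Suc p) b" unfolding code_at_def
  proof (intro conjI allI impI)
    fix q assume "q < len b"
    then show "P ! (Suc p + q) = comp (Suc p) b ! q"
      using A[of "Suc q"] by (simp add: nth_append)
  qed (use L in simp)
qed

lemma step_basic:
  assumes "pc < length P" "P ! pc = i" "basic i"
  shows "step P (pc, M) = (Suc pc, upd i M)"
proof -
  have "\<not> halted P (pc, M)" using assms unfolding halted_def by (cases i) auto
  then show ?thesis unfolding step_def using assms exec_basic by simp
qed

lemma comp_correct:
  assumes "bs c M M' t" "wfc c" "code_at P p c"
  shows "run P t (p, M) = (p + len c, M')"
  using assms
proof (induction arbitrary: p rule: bs.induct)
  case (bsCI i M)
  then have "P ! p = i" "p < length P" unfolding code_at_def by auto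
  then show ?case using bsCI step_basic by (simp add: run_1)
next
  case (bsSeq a M M1 t1 b M2 t2)
  show ?case using bsSeq code_at_Seq[OF bsSeq.prems(2)] by (simp add: run_add add.assoc)
next
  case (bsW0 M r b)
  note C = code_at_While[OF bsW0.prems(2)]
  have "\<not> halted P (p, M)" using C unfolding halted_def by simp
  then show ?case using C bsW0 by (simp add: run_1 step_def)
next
  case (bsW1 M r b M1 t1 M2 t2)
  note C = code_at_While[OF bsW1.prems(2)]
  have "\<not> halted P (p, M)" using C unfolding halted_def by simp
  then have s1: "run P 1 (p, M) = (Suc p, M)" using C bsW1 by (simp add: run_1 step_def)
  have s2: "run P t1 (Suc p, M) = (Suc p + len b, M1)" using bsW1 C by simp
  have "\<not> halted P (Suc p + len b, M1)" using C unfolding halted_def by simp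
  then have s3: "run P 1 (Suc p + len b, M1) = (p, M1)" using C by (simp add: run_1 step_def)
  have s4: "run P t2 (p, M1) = (p + len (While r b), M2)" using bsW1 by simp
  have "run P (t1 + t2 + 2) (p, M) = run P t2 (run P 1 (run P t1 (run P 1 (p, M))))"
    by (simp add: run_add[symmetric] algebra_simps)
  then show ?case using s1 s2 s3 s4 by simp
qed

definition ex :: "com \<Rightarrow> (nat \<Rightarrow> nat) \<Rightarrow> ((nat \<Rightarrow> nat) \<Rightarrow> bool) \<Rightarrow> nat \<Rightarrow> bool" where
  "ex c M Q B \<longleftrightarrow> (\<exists>M' t. bs c M M' t \<and> Q M' \<and> t \<le> B)"

lemma ex_weaken: "ex c M Q B' \<Longrightarrow> B' \<le> B \<Longrightarrow> ex c M Q B"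
  unfolding ex_def by force

lemma ex_post: "ex c M Q B \<Longrightarrow> (\<And>M'. Q M' \<Longrightarrow> Q' M') \<Longrightarrow> ex c M Q' B"
  unfolding ex_def by blast

lemma ex_CI: "Q (upd i M) \<Longrightarrow> ex (CI i) M Q 1"
  unfolding ex_def by (blast intro: bs.intros)

lemma ex_SeqCI: "ex b (upd i M) Q B \<Longrightarrow> ex (Seq (CI i) b) M Q (Suc B)"
  unfolding ex_def by (force intro: bs.intros)

lemma ex_Seq: "ex a M Qa Ba \<Longrightarrow> (\<And>M1. Qa M1 \<Longrightarrow> ex b M1 Q Bb) \<Longrightarrow> ex (Seq a b) M Q (Ba + Bb)"
proof -
  assume a: "ex a M Qa Ba" and b: "\<And>M1. Qa M1 \<Longrightarrow> ex b M1 Q Bb"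
  from a obtain M1 t1 where 1: "bs a M M1 t1" "Qa M1" "t1 \<le> Ba" unfolding ex_def by blast
  from b[OF 1(2)] obtain M2 t2 where 2: "bs b M1 M2 t2" "Q M2" "t2 \<le> Bb" unfolding ex_def by blast
  show ?thesis unfolding ex_def using 1 2 by (force intro: bs.intros)
qed

lemma ex_While:
  assumes body: "\<And>q M. I (Suc q) M \<Longrightarrow> ex b M (I q) B"
    and cond: "\<And>q M. I q M \<Longrightarrow> (M r = 0 \<longleftrightarrow> q = 0)"
    and start: "I q M"
  shows "ex (While r b) M (I 0) (q * (B + 2) + 1)"
  using start
proof (induction q arbitrary: M)
  case 0
  then show ?case using cond[OF 0] unfolding ex_def by (force intro: bs.intros)
next
  case (Suc q)
  from body[OF Suc.prems] obtain M1 t1 where 1: "bs b M M1 t1" "I q M1" "t1 \<le> B" unfolding ex_def by blast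
  from Suc.IH[OF 1(2)] obtain M2 t2 where 2: "bs (While r b) M1 M2 t2" "I 0 M2" "t2 \<le> q * (B + 2) + 1"
    unfolding ex_def by blast
  have "M r \<noteq> 0" using cond[OF Suc.prems] by simp
  then have "bs (While r b) M M2 (t1 + t2 + 2)" using 1 2 by (blast intro: bs.intros)
  then show ?case unfolding ex_def using 1 2 by (intro exI[of _ M2] exI[of _ "t1 + t2 + 2"]) auto
qed


abbreviation "rM \<equiv> (0::nat)"
abbreviation "rK \<equiv> (1::nat)"
abbreviation "rJ \<equiv> (2::nat)"
abbreviation "rI \<equiv> (3::nat)"
abbreviation "ONE \<equiv> (4::nat)"
abbreviation "rW \<equiv> (5::nat)"
abbreviation "N0 \<equiv> (6::nat)"
abbreviation "NN \<equiv> (7::nat)"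
abbreviation "CN \<equiv> (8::nat)"
abbreviation "RHO \<equiv> (9::nat)"
abbreviation "P1 \<equiv> (10::nat)"
abbreviation "P2 \<equiv> (11::nat)"
abbreviation "LO1 \<equiv> (12::nat)"
abbreviation "HI1 \<equiv> (13::nat)"
abbreviation "LO2 \<equiv> (14::nat)"
abbreviation "PT \<equiv> (15::nat)"
abbreviation "rS \<equiv> (20::nat)"
abbreviation "ACC \<equiv> (21::nat)"
abbreviation "CNT \<equiv> (22::nat)"
abbreviation "PTR \<equiv> (23::nat)"
abbreviation "TMP \<equiv> (24::nat)"
abbreviation "T2 \<equiv> (25::nat)"
abbreviation "HIE \<equiv> (26::nat)"

definition WBODY :: com where
  "WBODY = CI (Sub CNT CNT ONE) ;; CI (Load TMP PTR) ;; CI (Add ACC ACC TMP) ;; CI (Sub PTR PTR ONE)"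

definition WSUM :: "nat \<Rightarrow> nat \<Rightarrow> nat \<Rightarrow> com" where
  "WSUM p lo hi = CI (Add TMP rS ONE) ;; CI (Sub T2 hi TMP) ;; CI (Sub HIE hi T2) ;; CI (Sub CNT HIE lo) ;;
     CI (Add PTR p rS) ;; CI (Sub PTR PTR lo) ;; While CNT WBODY"

lemma wsum_alt: "wsum A l h s = (\<Sum>c\<in>{l..<l + (min h (Suc s) - l)}. A (s - c))"
proof -
  have "wsum A l h s = (\<Sum>c\<in>{l..<h} \<inter> {..s}. A (s - c))"
    unfolding wsum_def using sum.inter_restrict[of "{l..<h}" "\<lambda>c. A (s - c)" "{..s}"] by simp
  also have "{l..<h} \<inter> {..s} = {l..<l + (min h (Suc s) - l)}" by auto
  finally show ?thesis .
qed

lemma wsum_cong: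
  assumes "\<And>t. t \<le> s \<Longrightarrow> A t = A' t"
  shows "wsum A l h s = wsum A' l h s"
  unfolding wsum_def using assms by (intro sum.cong) auto

lemma wsum_empty: "wsum A l l s = 0"
  unfolding wsum_def by simp

lemma WSUM_ex:
  assumes one: "M ONE = 1" and regs: "p < 20" "lo < 20" "hi < 20"
    and base: "32 \<le> M p" and hiX: "M hi \<le> X"
  shows "ex (WSUM p lo hi) M (\<lambda>M'. M' ACC = M ACC + wsum (\<lambda>t. M (M p + t)) (M lo) (M hi) (M rS)
            \<and> (\<forall>a. (a < 21 \<or> 26 < a) \<longrightarrow> M' a = M a)) (8 + 6 * X)"
proof -
  define s where "s = M rS"
  define P where "P = M p"
  define l where "l = M lo"
  define h where "h = M hi"
  define n0 where "n0 = min h (Suc s) - l"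
  define I where "I = (\<lambda>q M''. M'' CNT = q \<and> q \<le> n0 \<and> M'' PTR = P + s - l - (n0 - q)
      \<and> M'' ACC = M ACC + (\<Sum>c\<in>{l..<l + (n0 - q)}. M (P + s - c))
      \<and> (\<forall>a. (a < 21 \<or> 26 < a) \<longrightarrow> M'' a = M a))"
  define M1 where "M1 = upd (Sub PTR PTR lo) (upd (Add PTR p rS) (upd (Sub CNT HIE lo) (upd (Sub HIE hi T2)
      (upd (Sub T2 hi TMP) (upd (Add TMP rS ONE) M)))))"
  have body: "ex WBODY M'' (I q) 4" if I: "I (Suc q) M''" for q M''
    unfolding WBODY_def
  proof (rule ex_weaken, (rule ex_SeqCI)+, rule ex_CI)
    define d where "d = n0 - Suc q"
    have q: "Suc q \<le> n0" and c: "M'' CNT = Suc q" and pt: "M'' PTR = P + s - l - d"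
      and acc: "M'' ACC = M ACC + (\<Sum>c\<in>{l..<l + d}. M (P + s - c))"
      and fr: "\<forall>a. (a < 21 \<or> 26 < a) \<longrightarrow> M'' a = M a"
      using I unfolding I_def d_def by auto
    have ld: "l + d \<le> s" using q unfolding d_def n0_def by auto
    have addr: "P + s - l - d = P + s - (l + d)" by simp
    have big: "26 < P + s - (l + d)" using ld base unfolding P_def by simp
    have one'': "M'' ONE = 1" using fr one by simp
    have rd: "M'' (M'' PTR) = M (P + s - (l + d))" using pt addr big fr by simp
    have nd: "n0 - q = Suc d" using q unfolding d_def by simp
    have sum: "(\<Sum>c\<in>{l..<l + Suc d}. M (P + s - c)) = (\<Sum>c\<in>{l..<l + d}. M (P + s - c)) + M (P + s - (l + d))"
      by simp
    have Mf: "upd (Sub PTR PTR ONE) (upd (Add ACC ACC TMP) (upd (Load TMP PTR) (upd (Sub CNT CNT ONE) M'')))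
       = M''(CNT := q, TMP := M (P + s - (l + d)), ACC := M'' ACC + M (P + s - (l + d)), PTR := M'' PTR - 1)"
    proof -
      have "(M''(CNT := q)) (M'' PTR) = M (P + s - (l + d))" using pt addr big fr by simp
      then show ?thesis using c one'' by (simp add: fun_upd_twist)
    qed
    show "I q (upd (Sub PTR PTR ONE) (upd (Add ACC ACC TMP) (upd (Load TMP PTR) (upd (Sub CNT CNT ONE) M''))))"
      unfolding Mf I_def using q pt acc fr nd sum addr by simp
  qed simp
  have cond: "(M'' CNT = 0 \<longleftrightarrow> q = 0)" if "I q M''" for q M''
    using that unfolding I_def by auto
  have start: "I n0 M1"
    unfolding I_def M1_def using one regs unfolding s_def P_def l_def h_def n0_def by auto
  have w: "ex (While CNT WBODY) M1 (I 0) (n0 * (4 + 2) + 1)"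
    by (rule ex_While[where I = I, OF body cond start])
  have w2: "ex (While CNT WBODY) M1 (\<lambda>M'. M' ACC = M ACC + wsum (\<lambda>t. M (M p + t)) (M lo) (M hi) (M rS)
            \<and> (\<forall>a. (a < 21 \<or> 26 < a) \<longrightarrow> M' a = M a)) (n0 * (4 + 2) + 1)"
  proof (rule ex_post[OF w])
    fix M' assume "I 0 M'"
    then have a: "M' ACC = M ACC + (\<Sum>c\<in>{l..<l + n0}. M (P + s - c))"
      and f: "\<forall>a. (a < 21 \<or> 26 < a) \<longrightarrow> M' a = M a" unfolding I_def by auto
    have "(\<Sum>c\<in>{l..<l + n0}. M (P + s - c)) = (\<Sum>c\<in>{l..<l + n0}. M (P + (s - c)))"
      by (rule sum.cong) (auto simp: n0_def)
    also have "\<dots> = wsum (\<lambda>t. M (M p + t)) (M lo) (M hi) (M rS)"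
      by (simp add: wsum_alt n0_def s_def P_def l_def h_def)
    finally show "M' ACC = M ACC + wsum (\<lambda>t. M (M p + t)) (M lo) (M hi) (M rS)
            \<and> (\<forall>a. (a < 21 \<or> 26 < a) \<longrightarrow> M' a = M a)" using a f by simp
  qed
  have e: "ex (WSUM p lo hi) M (\<lambda>M'. M' ACC = M ACC + wsum (\<lambda>t. M (M p + t)) (M lo) (M hi) (M rS)
            \<and> (\<forall>a. (a < 21 \<or> 26 < a) \<longrightarrow> M' a = M a)) (Suc (Suc (Suc (Suc (Suc (Suc (n0 * (4 + 2) + 1)))))))"
    unfolding WSUM_def M1_def using w2[unfolded M1_def] by (intro ex_SeqCI)
  have "n0 \<le> X" using hiX unfolding n0_def h_def by simp
  then show ?thesis by (intro ex_weaken[OF e]) simp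
qed


definition RBODY :: "nat \<Rightarrow> nat \<Rightarrow> nat \<Rightarrow> nat \<Rightarrow> nat \<Rightarrow> nat \<Rightarrow> com" where
  "RBODY p1 lo1 hi1 p2 lo2 hi2 = CI (Sub rS rS ONE) ;; CI (Const ACC 0) ;; WSUM p1 lo1 hi1 ;;
     WSUM p2 lo2 hi2 ;; CI (Add PTR p2 rS) ;; CI (Store PTR ACC)"

definition ROW :: "nat \<Rightarrow> nat \<Rightarrow> nat \<Rightarrow> nat \<Rightarrow> nat \<Rightarrow> nat \<Rightarrow> com" where
  "ROW p1 lo1 hi1 p2 lo2 hi2 = CI (Add rS rK ONE) ;; While rS (RBODY p1 lo1 hi1 p2 lo2 hi2)"

lemma ROW_ex:
  assumes one: "M ONE = 1" and regs: "p1 < 20" "lo1 < 20" "hi1 < 20" "p2 < 20" "lo2 < 20" "hi2 < 20"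
    and base: "32 \<le> M p1" "32 \<le> M p2" and disj: "M p1 + M rK < M p2 \<or> M p2 + M rK < M p1"
    and hX: "M hi1 \<le> X" "M hi2 \<le> X" and kY: "M rK + 1 \<le> Y"
  shows "ex (ROW p1 lo1 hi1 p2 lo2 hi2) M (\<lambda>M'.
      (\<forall>s \<le> M rK. M' (M p2 + s) = wsum (\<lambda>t. M (M p1 + t)) (M lo1) (M hi1) s + wsum (\<lambda>t. M (M p2 + t)) (M lo2) (M hi2) s)
    \<and> (\<forall>a. (a < 20 \<or> 26 < a) \<and> (a < M p2 \<or> M p2 + M rK < a) \<longrightarrow> M' a = M a)) (2 + Y * (22 + 12 * X))"
proof -
  define k where "k = M rK"
  define Pa where "Pa = M p1"
  define Pb where "Pb = M p2"
  define new where "new = (\<lambda>s. wsum (\<lambda>t. M (Pa + t)) (M lo1) (M hi1) s + wsum (\<lambda>t. M (Pb + t)) (M lo2) (M hi2) s)"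
  define I where "I = (\<lambda>q M''. M'' rS = q \<and> q \<le> Suc k
      \<and> (\<forall>s \<le> k. M'' (Pb + s) = (if q \<le> s then new s else M (Pb + s)))
      \<and> (\<forall>a. (a < 20 \<or> 26 < a) \<and> (a < Pb \<or> Pb + k < a) \<longrightarrow> M'' a = M a))"
  have body: "ex (RBODY p1 lo1 hi1 p2 lo2 hi2) M'' (I q) (Suc (Suc ((8 + 6 * X) + ((8 + 6 * X) + Suc 1))))"
    if I: "I (Suc q) M''" for q M''
  proof -
    have q: "q \<le> k" and sr: "M'' rS = Suc q"
      and row: "\<And>s. s \<le> k \<Longrightarrow> M'' (Pb + s) = (if Suc q \<le> s then new s else M (Pb + s))"
      and fr: "\<And>a. (a < 20 \<or> 26 < a) \<and> (a < Pb \<or> Pb + k < a) \<Longrightarrow> M'' a = M a"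
      using I unfolding I_def by auto
    have frR: "\<And>a. a < 20 \<Longrightarrow> M'' a = M a" using fr base unfolding Pb_def by auto
    define Ma where "Ma = upd (Const ACC 0) (upd (Sub rS rS ONE) M'')"
    have Ma: "Ma = M''(rS := q, ACC := 0)" unfolding Ma_def using sr frR[of ONE] one by simp
    have Ma_regs: "\<And>a. a < 20 \<Longrightarrow> Ma a = M a" using frR unfolding Ma by simp
    have Ma_S: "Ma rS = q" unfolding Ma by simp
    define Q1 where "Q1 = (\<lambda>M'. M' ACC = Ma ACC + wsum (\<lambda>t. Ma (Ma p1 + t)) (Ma lo1) (Ma hi1) (Ma rS)
            \<and> (\<forall>a. (a < 21 \<or> 26 < a) \<longrightarrow> M' a = Ma a))"
    have w1: "ex (WSUM p1 lo1 hi1) Ma Q1 (8 + 6 * X)"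
      unfolding Q1_def using regs Ma_regs one base hX by (intro WSUM_ex) auto
    have rest: "ex (WSUM p2 lo2 hi2 ;; CI (Add PTR p2 rS) ;; CI (Store PTR ACC)) Mb (I q) ((8 + 6 * X) + Suc 1)"
      if Q1: "Q1 Mb" for Mb
    proof -
      have Mb_fr: "\<And>a. (a < 21 \<or> 26 < a) \<Longrightarrow> Mb a = Ma a" using Q1 unfolding Q1_def by auto
      have Mb_regs: "\<And>a. a < 20 \<Longrightarrow> Mb a = M a" using Mb_fr Ma_regs by simp
      have Mb_acc: "Mb ACC = wsum (\<lambda>t. M (Pa + t)) (M lo1) (M hi1) q"
      proof -
        have e1: "Ma p1 = Pa" "Ma lo1 = M lo1" "Ma hi1 = M hi1" "Ma ACC = 0"
          using Ma_regs regs unfolding Pa_def by (simp_all add: Ma)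
        have "Mb ACC = Ma ACC + wsum (\<lambda>t. Ma (Ma p1 + t)) (Ma lo1) (Ma hi1) (Ma rS)"
          using Q1 unfolding Q1_def by blast
        then have "Mb ACC = wsum (\<lambda>t. Ma (Pa + t)) (M lo1) (M hi1) q"
          by (simp only: e1 Ma_S add_0)
        also have "\<dots> = wsum (\<lambda>t. M (Pa + t)) (M lo1) (M hi1) q"
        proof (rule wsum_cong)
          fix t assume "t \<le> q"
          then have "t \<le> k" using q by simp
          then have "Pa + t < Pb \<or> Pb + k < Pa + t" using disj unfolding Pa_def Pb_def k_def by auto
          moreover have "26 < Pa + t" using base unfolding Pa_def by simp
          ultimately show "Ma (Pa + t) = M (Pa + t)" unfolding Ma using fr by simp
        qed
        finally show ?thesis .
      qed
      define Q2 where "Q2 = (\<lambda>M'. M' ACC = Mb ACC + wsum (\<lambda>t. Mb (Mb p2 + t)) (Mb lo2) (Mb hi2) (Mb rS)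
            \<and> (\<forall>a. (a < 21 \<or> 26 < a) \<longrightarrow> M' a = Mb a))"
      have w2: "ex (WSUM p2 lo2 hi2) Mb Q2 (8 + 6 * X)"
        unfolding Q2_def using regs Mb_regs one base hX by (intro WSUM_ex) auto
      show ?thesis
      proof (rule ex_Seq[OF w2], rule ex_SeqCI, rule ex_CI)
        fix Mc assume Q2: "Q2 Mc"
        have Mc_fr: "\<And>a. (a < 21 \<or> 26 < a) \<Longrightarrow> Mc a = Mb a" using Q2 unfolding Q2_def by auto
        have Mc_regs: "\<And>a. a < 20 \<Longrightarrow> Mc a = M a" using Mc_fr Mb_regs by simp
        have Mc_S: "Mc rS = q" using Mc_fr[of rS] Mb_fr[of rS] Ma_S by simp
        have Mc_acc: "Mc ACC = new q"
        proof -
          have e2: "Mb p2 = Pb" "Mb lo2 = M lo2" "Mb hi2 = M hi2" "Mb rS = q"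
            using Mb_regs regs Mb_fr[of rS] Ma_S unfolding Pb_def by simp_all
          have "Mc ACC = Mb ACC + wsum (\<lambda>t. Mb (Mb p2 + t)) (Mb lo2) (Mb hi2) (Mb rS)"
            using Q2 unfolding Q2_def by blast
          then have "Mc ACC = Mb ACC + wsum (\<lambda>t. Mb (Pb + t)) (M lo2) (M hi2) q"
            by (simp only: e2)
          also have "wsum (\<lambda>t. Mb (Pb + t)) (M lo2) (M hi2) q = wsum (\<lambda>t. M (Pb + t)) (M lo2) (M hi2) q"
          proof (rule wsum_cong)
            fix t assume t: "t \<le> q"
            have "26 < Pb + t" using base unfolding Pb_def by simp
            then have "Mb (Pb + t) = M'' (Pb + t)" using Mb_fr unfolding Ma by simp
            also have "\<dots> = M (Pb + t)" using row[of t] t q by simp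
            finally show "Mb (Pb + t) = M (Pb + t)" .
          qed
          finally show ?thesis using Mb_acc unfolding new_def by simp
        qed
        define Md where "Md = upd (Store PTR ACC) (upd (Add PTR p2 rS) Mc)"
        have Md: "Md = Mc(PTR := Pb + q, Pb + q := new q)"
          unfolding Md_def using Mc_regs[of p2] regs Mc_S Mc_acc base unfolding Pb_def by simp
        show "I q Md"
          unfolding I_def
        proof (intro conjI allI impI)
          show "Md rS = q" unfolding Md using Mc_S base unfolding Pb_def by simp
          show "q \<le> Suc k" using q by simp
        next
          fix s assume s: "s \<le> k"
          show "Md (Pb + s) = (if q \<le> s then new s else M (Pb + s))"
          proof (cases "s = q")
            case True
            then show ?thesis unfolding Md by simp
          next
            case False
            have "26 < Pb + s" using base unfolding Pb_def by simp
            then have "Md (Pb + s) = M'' (Pb + s)" unfolding Md using False Mc_fr Mb_fr by (simp add: Ma)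
            then show ?thesis using row[OF s] False by simp
          qed
        next
          fix a assume a: "(a < 20 \<or> 26 < a) \<and> (a < Pb \<or> Pb + k < a)"
          then have "a \<noteq> Pb + q" "a \<noteq> PTR" using q by auto
          then have "Md a = M'' a" unfolding Md using a Mc_fr Mb_fr by (auto simp: Ma)
          then show "Md a = M a" using fr a by simp
        qed
      qed
    qed
    show ?thesis unfolding RBODY_def
      by (rule ex_SeqCI, rule ex_SeqCI, fold Ma_def, rule ex_Seq[OF w1 rest])
  qed
  have cond: "(M'' rS = 0 \<longleftrightarrow> q = 0)" if "I q M''" for q M''
    using that unfolding I_def by auto
  define M1 where "M1 = upd (Add rS rK ONE) M"
  have start: "I (Suc k) M1"
    unfolding I_def M1_def using one base unfolding k_def Pb_def by auto
  have w: "ex (While rS (RBODY p1 lo1 hi1 p2 lo2 hi2)) M1 (I 0) (Suc k * (Suc (Suc ((8 + 6 * X) + ((8 + 6 * X) + Suc 1))) + 2) + 1)"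
    by (rule ex_While[where I = I, OF body cond start])
  have e: "ex (ROW p1 lo1 hi1 p2 lo2 hi2) M (\<lambda>M'.
      (\<forall>s \<le> M rK. M' (M p2 + s) = wsum (\<lambda>t. M (M p1 + t)) (M lo1) (M hi1) s + wsum (\<lambda>t. M (M p2 + t)) (M lo2) (M hi2) s)
    \<and> (\<forall>a. (a < 20 \<or> 26 < a) \<and> (a < M p2 \<or> M p2 + M rK < a) \<longrightarrow> M' a = M a))
      (Suc (Suc k * (Suc (Suc ((8 + 6 * X) + ((8 + 6 * X) + Suc 1))) + 2) + 1))"
    unfolding ROW_def
  proof (rule ex_SeqCI, fold M1_def, rule ex_post[OF w])
    fix M' assume "I 0 M'"
    then show "(\<forall>s \<le> M rK. M' (M p2 + s) = wsum (\<lambda>t. M (M p1 + t)) (M lo1) (M hi1) s + wsum (\<lambda>t. M (M p2 + t)) (M lo2) (M hi2) s)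
    \<and> (\<forall>a. (a < 20 \<or> 26 < a) \<and> (a < M p2 \<or> M p2 + M rK < a) \<longrightarrow> M' a = M a)"
      unfolding I_def new_def k_def Pa_def Pb_def by auto
  qed
  have "Suc k * (22 + 12 * X) \<le> Y * (22 + 12 * X)" using kY unfolding k_def by (intro mult_right_mono) auto
  then show ?thesis by (intro ex_weaken[OF e]) (simp add: algebra_simps)
qed


lemma addr_lt:
  assumes "\<rho> < \<rho>'" "s \<le> k"
  shows "\<rho> * Suc k + s < \<rho>' * Suc k"
proof -
  have "\<rho> * Suc k + s < Suc \<rho> * Suc k" using assms(2) by simp
  also have "\<dots> \<le> \<rho>' * Suc k" using assms(1) by (intro mult_right_mono) auto
  finally show ?thesis .
qed

lemma row_frame:
  assumes "\<rho> \<noteq> r" "s \<le> k"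
  shows "32 + \<rho> * Suc k + s < 32 + r * Suc k \<or> 32 + r * Suc k + k < 32 + \<rho> * Suc k + s"
proof (cases "\<rho> < r")
  case True
  then show ?thesis using addr_lt[OF True assms(2)] by simp
next
  case False
  then have "r < \<rho>" using assms(1) by simp
  then show ?thesis using addr_lt[OF \<open>r < \<rho>\<close>, where s = k and k = k] by simp
qed

definition GBODY :: com where
  "GBODY = CI (Sub CN CN ONE) ;; CI (Add NN NN ONE) ;; ROW P1 LO1 HI1 P2 LO2 NN"

definition IBODY :: com where
  "IBODY = CI (Sub CN CN ONE) ;; CI (Add LO1 RHO LO2) ;; CI (Add RHO RHO ONE) ;; CI (Add P2 P2 rW) ;;
     ROW P1 LO1 RHO P2 LO2 LO2"

definition FIN :: com where
  "FIN = CI (Sub P1 P2 rW) ;; CI (Sub HI1 RHO ONE) ;; ROW P1 LO1 HI1 P2 RHO NN ;; CI (Sub RHO RHO ONE) ;;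
     CI (Add P2 P1 LO2)"

definition FBODY :: com where
  "FBODY = CI (Sub CN CN ONE) ;; CI (Add NN NN ONE) ;; CI (Add RHO rJ LO2) ;; CI (Add P2 PT LO2) ;; While RHO FIN"

locale ctx =
  fixes m k j i :: nat
  assumes m1: "1 \<le> m" and kb: "k \<le> m * (m - 1) div 2" and jr: "j \<in> {1..m}" and ir: "i \<in> {1..m}"
begin

abbreviation "X \<equiv> Suc m"
abbreviation "Y \<equiv> Suc m * Suc m"
abbreviation "RB \<equiv> 2 + Y * (22 + 12 * X)"
abbreviation "n0 \<equiv> Suc m - i"

definition base :: "(nat \<Rightarrow> nat) \<Rightarrow> bool" where
  "base M \<longleftrightarrow> M rM = m \<and> M rK = k \<and> M rJ = j \<and> M rI = i \<and> M ONE = 1 \<and> M rW = Suc k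
     \<and> M N0 = n0 \<and> M LO2 = 0"

definition rowv :: "(nat \<Rightarrow> nat) \<Rightarrow> nat \<Rightarrow> (nat \<Rightarrow> nat) \<Rightarrow> bool" where
  "rowv M \<rho> f \<longleftrightarrow> (\<forall>s \<le> k. M (32 + \<rho> * Suc k + s) = f s)"

lemma kY: "k + 1 \<le> Y"
proof -
  have "k \<le> m * (m - 1)" using kb by (meson div_le_dividend le_trans)
  also have "\<dots> \<le> m * m" by simp
  finally show ?thesis by simp
qed

lemma base_upd: "base M \<Longrightarrow> a \<notin> {rM, rK, rJ, rI, ONE, rW, N0, LO2} \<Longrightarrow> base (M(a := v))"
  unfolding base_def by auto

lemma base_frame: "base M \<Longrightarrow> (\<And>a. a < 20 \<Longrightarrow> M' a = M a) \<Longrightarrow> base M'"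
  unfolding base_def by simp

definition IG :: "nat \<Rightarrow> (nat \<Rightarrow> nat) \<Rightarrow> bool" where
  "IG q M \<longleftrightarrow> base M \<and> M CN = q \<and> q \<le> n0 - 1 \<and> M NN = n0 - 1 - q \<and> M P1 = 32 + Suc k \<and> M P2 = 32
     \<and> M LO1 = 0 \<and> M HI1 = 0 \<and> rowv M 0 (Gs (M NN))"

lemma G_body:
  assumes "IG (Suc q) M"
  shows "ex GBODY M (IG q) (Suc (Suc RB))"
proof -
  have b: "base M" and c: "M CN = Suc q" "Suc q \<le> n0 - 1" "M NN = n0 - 1 - Suc q" "M P1 = 32 + Suc k" "M P2 = 32"
     "M LO1 = 0" "M HI1 = 0" and r: "rowv M 0 (Gs (M NN))" using assms unfolding IG_def by auto
  define M2 where "M2 = upd (Add NN NN ONE) (upd (Sub CN CN ONE) M)"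
  have M2: "M2 = M(CN := q, NN := Suc (M NN))" using b c unfolding M2_def base_def by simp
  have b2: "base M2" unfolding M2 using b by (simp add: base_def)
  have n: "M2 NN = n0 - 1 - q" "M2 NN = Suc (M NN)" using c by (simp_all add: M2)
  have rw: "ex (ROW P1 LO1 HI1 P2 LO2 NN) M2 (\<lambda>M'.
      (\<forall>s \<le> M2 rK. M' (M2 P2 + s) = wsum (\<lambda>t. M2 (M2 P1 + t)) (M2 LO1) (M2 HI1) s + wsum (\<lambda>t. M2 (M2 P2 + t)) (M2 LO2) (M2 NN) s)
    \<and> (\<forall>a. (a < 20 \<or> 26 < a) \<and> (a < M2 P2 \<or> M2 P2 + M2 rK < a) \<longrightarrow> M' a = M2 a)) RB"
  proof (rule ROW_ex)
    show "M2 NN \<le> X" using n ir by simp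
    show "M2 rK + 1 \<le> Y" using b2 kY unfolding base_def by simp
  qed (use b2 c in \<open>simp_all add: M2 base_def\<close>)
  show ?thesis unfolding GBODY_def
  proof (rule ex_SeqCI, rule ex_SeqCI, fold M2_def, rule ex_post[OF rw])
    fix M' assume post: "(\<forall>s \<le> M2 rK. M' (M2 P2 + s) = wsum (\<lambda>t. M2 (M2 P1 + t)) (M2 LO1) (M2 HI1) s + wsum (\<lambda>t. M2 (M2 P2 + t)) (M2 LO2) (M2 NN) s)
      \<and> (\<forall>a. (a < 20 \<or> 26 < a) \<and> (a < M2 P2 \<or> M2 P2 + M2 rK < a) \<longrightarrow> M' a = M2 a)"
    have v2: "M2 rK = k" "M2 P2 = 32" "M2 P1 = 32 + Suc k" "M2 LO1 = 0" "M2 HI1 = 0" "M2 LO2 = 0"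
      using b2 c unfolding base_def by (simp_all add: M2)
    have fr: "\<And>a. a < 20 \<Longrightarrow> M' a = M2 a" using post v2 by simp
    have row: "\<And>s. s \<le> k \<Longrightarrow> M' (32 + s) = wsum (\<lambda>t. M2 (32 + t)) 0 (M2 NN) s"
      using post v2 by (simp add: wsum_empty)
    show "IG q M'"
      unfolding IG_def
    proof (intro conjI)
      show "base M'" using base_frame[OF b2 fr] .
      show "M' CN = q" "q \<le> n0 - 1" "M' NN = n0 - 1 - q" "M' P1 = 32 + Suc k" "M' P2 = 32" "M' LO1 = 0" "M' HI1 = 0"
        using fr[of CN] fr[of NN] fr[of P1] fr[of P2] fr[of LO1] fr[of HI1] v2 n c by (simp_all add: M2)
      show "rowv M' 0 (Gs (M' NN))"
        unfolding rowv_def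
      proof (intro allI impI)
        fix s assume s: "s \<le> k"
        have "M' (32 + 0 * Suc k + s) = wsum (\<lambda>t. M2 (32 + t)) 0 (M2 NN) s" using row s by simp
        also have "\<dots> = wsum (Gs (M NN)) 0 (Suc (M NN)) s"
        proof (subst n(2), rule wsum_cong)
          fix t assume "t \<le> s"
          then show "M2 (32 + t) = Gs (M NN) t" using r s unfolding rowv_def by (simp add: M2)
        qed
        also have "\<dots> = Gs (Suc (M NN)) s" by simp
        finally have e: "M' (32 + 0 * Suc k + s) = Gs (Suc (M NN)) s" .
        have g: "M' NN = Suc (M NN)" using fr[of NN] n by (simp add: M2)
        show "M' (32 + 0 * Suc k + s) = Gs (M' NN) s" unfolding g by (rule e)
      qed
    qed
  qed
qed

end



definition MAIN :: com where
  "MAIN = CI (Const ONE 1) ;; CI (Add rW rK ONE) ;; CI (Const P2 32) ;; CI (Store P2 ONE) ;; CI (Add P1 P2 rW) ;;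
     CI (Const LO1 0) ;; CI (Const HI1 0) ;; CI (Const LO2 0) ;; CI (Add N0 rM ONE) ;; CI (Sub N0 N0 rI) ;;
     CI (Sub CN N0 ONE) ;; CI (Const NN 0) ;;
     While CN GBODY ;;
     CI (Const P1 32) ;; CI (Const RHO 0) ;; CI (Add CN rJ LO2) ;;
     While CN IBODY ;;
     CI (Add NN N0 LO2) ;; CI (Add PT P2 LO2) ;; CI (Sub CN rM N0) ;; CI (Const LO1 0) ;;
     While CN FBODY ;;
     CI (Add TMP PT rK) ;; CI (Load rM TMP)"


context ctx
begin

lemma ROW_tab:
  assumes b: "base M" and regs: "p1 < 20" "lo1 < 20" "hi1 < 20" "p2 < 20" "lo2 < 20" "hi2 < 20"
    and p: "M p1 = 32 + r1 * Suc k" "M p2 = 32 + r2 * Suc k" "r1 \<noteq> r2"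
    and hX: "M hi1 \<le> X" "M hi2 \<le> X"
  shows "ex (ROW p1 lo1 hi1 p2 lo2 hi2) M (\<lambda>M'. (\<forall>a<20. M' a = M a)
     \<and> (\<forall>\<rho> s. \<rho> \<noteq> r2 \<longrightarrow> s \<le> k \<longrightarrow> M' (32 + \<rho> * Suc k + s) = M (32 + \<rho> * Suc k + s))
     \<and> (\<forall>s \<le> k. M' (32 + r2 * Suc k + s) = wsum (\<lambda>t. M (32 + r1 * Suc k + t)) (M lo1) (M hi1) s
                                            + wsum (\<lambda>t. M (32 + r2 * Suc k + t)) (M lo2) (M hi2) s)) RB"
proof -
  have kk: "M rK = k" "M ONE = 1" using b unfolding base_def by auto
  have d: "M p1 + M rK < M p2 \<or> M p2 + M rK < M p1"
  proof (cases "r1 < r2")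
    case True
    then show ?thesis using addr_lt[OF True, where s = k and k = k] p kk by simp
  next
    case False
    then have "r2 < r1" using p(3) by simp
    then show ?thesis using addr_lt[OF \<open>r2 < r1\<close>, where s = k and k = k] p kk by simp
  qed
  show ?thesis
  proof (rule ex_post[OF ROW_ex[OF kk(2) regs _ _ d hX]])
    show "32 \<le> M p1" "32 \<le> M p2" using p by auto
    show "M rK + 1 \<le> Y" using kk kY by simp
  next
    fix M' assume post: "(\<forall>s\<le>M rK. M' (M p2 + s) = wsum (\<lambda>t. M (M p1 + t)) (M lo1) (M hi1) s + wsum (\<lambda>t. M (M p2 + t)) (M lo2) (M hi2) s) \<and>
         (\<forall>a. (a < 20 \<or> 26 < a) \<and> (a < M p2 \<or> M p2 + M rK < a) \<longrightarrow> M' a = M a)"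
    show "(\<forall>a<20. M' a = M a)
     \<and> (\<forall>\<rho> s. \<rho> \<noteq> r2 \<longrightarrow> s \<le> k \<longrightarrow> M' (32 + \<rho> * Suc k + s) = M (32 + \<rho> * Suc k + s))
     \<and> (\<forall>s \<le> k. M' (32 + r2 * Suc k + s) = wsum (\<lambda>t. M (32 + r1 * Suc k + t)) (M lo1) (M hi1) s
                                            + wsum (\<lambda>t. M (32 + r2 * Suc k + t)) (M lo2) (M hi2) s)"
    proof (intro conjI allI impI)
      fix a :: nat assume "a < 20" then show "M' a = M a" using post p kk by simp
    next
      fix \<rho> s :: nat assume r: "\<rho> \<noteq> r2" "s \<le> k"
      have "26 < 32 + \<rho> * Suc k + s" by simp
      then show "M' (32 + \<rho> * Suc k + s) = M (32 + \<rho> * Suc k + s)"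
        using post row_frame[OF r] p kk by auto
    next
      fix s assume "s \<le> k"
      then show "M' (32 + r2 * Suc k + s) = wsum (\<lambda>t. M (32 + r1 * Suc k + t)) (M lo1) (M hi1) s
                                            + wsum (\<lambda>t. M (32 + r2 * Suc k + t)) (M lo2) (M hi2) s"
        using post p kk by (simp add: add.assoc)
    qed
  qed
qed

lemma rowv_keep:
  assumes "rowv M \<rho> f" "\<rho> \<noteq> r2" "\<forall>\<rho> s. \<rho> \<noteq> r2 \<longrightarrow> s \<le> k \<longrightarrow> M' (32 + \<rho> * Suc k + s) = M (32 + \<rho> * Suc k + s)"
  shows "rowv M' \<rho> f"
  using assms unfolding rowv_def by auto

definition II :: "nat \<Rightarrow> (nat \<Rightarrow> nat) \<Rightarrow> bool" where
  "II q M \<longleftrightarrow> base M \<and> M CN = q \<and> q \<le> j \<and> M RHO = j - q \<and> M P2 = 32 + (j - q) * Suc k \<and> M P1 = 32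
     \<and> rowv M 0 (Gs (n0 - 1)) \<and> (\<forall>\<rho>. 1 \<le> \<rho> \<and> \<rho> \<le> j - q \<longrightarrow> rowv M \<rho> (Fn n0 (\<rho> - 1) 0))"

lemma I_body:
  assumes "II (Suc q) M"
  shows "ex IBODY M (II q) (Suc (Suc (Suc (Suc RB))))"
proof -
  define r where "r = j - Suc q"
  have b: "base M" and c: "M CN = Suc q" "Suc q \<le> j" "M RHO = r" "M P2 = 32 + r * Suc k" "M P1 = 32"
    and r0: "rowv M 0 (Gs (n0 - 1))" and rs: "\<And>\<rho>. 1 \<le> \<rho> \<Longrightarrow> \<rho> \<le> r \<Longrightarrow> rowv M \<rho> (Fn n0 (\<rho> - 1) 0)"
    using assms unfolding II_def r_def by auto
  define M4 where "M4 = upd (Add P2 P2 rW) (upd (Add RHO RHO ONE) (upd (Add LO1 RHO LO2) (upd (Sub CN CN ONE) M)))"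
  have M4: "M4 = M(CN := q, LO1 := r, RHO := Suc r, P2 := 32 + Suc r * Suc k)"
    using b c unfolding M4_def base_def by (simp add: algebra_simps)
  have b4: "base M4" unfolding M4 using b by (simp add: base_def)
  have v4: "M4 P1 = 32 + 0 * Suc k" "M4 P2 = 32 + Suc r * Suc k" "M4 RHO = Suc r" "M4 LO1 = r" "M4 LO2 = 0"
    using b c unfolding base_def by (simp_all add: M4)
  have rw: "ex (ROW P1 LO1 RHO P2 LO2 LO2) M4 (\<lambda>M'. (\<forall>a<20. M' a = M4 a)
     \<and> (\<forall>\<rho> s. \<rho> \<noteq> Suc r \<longrightarrow> s \<le> k \<longrightarrow> M' (32 + \<rho> * Suc k + s) = M4 (32 + \<rho> * Suc k + s))
     \<and> (\<forall>s \<le> k. M' (32 + Suc r * Suc k + s) = wsum (\<lambda>t. M4 (32 + 0 * Suc k + t)) (M4 LO1) (M4 RHO) s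
                                            + wsum (\<lambda>t. M4 (32 + Suc r * Suc k + t)) (M4 LO2) (M4 LO2) s)) RB"
    by (rule ROW_tab[OF b4]) (use v4 c jr in \<open>simp_all add: r_def\<close>)
  show ?thesis unfolding IBODY_def
  proof (rule ex_SeqCI, rule ex_SeqCI, rule ex_SeqCI, rule ex_SeqCI, fold M4_def, rule ex_post[OF rw])
    fix M' assume post: "(\<forall>a<20. M' a = M4 a)
     \<and> (\<forall>\<rho> s. \<rho> \<noteq> Suc r \<longrightarrow> s \<le> k \<longrightarrow> M' (32 + \<rho> * Suc k + s) = M4 (32 + \<rho> * Suc k + s))
     \<and> (\<forall>s \<le> k. M' (32 + Suc r * Suc k + s) = wsum (\<lambda>t. M4 (32 + 0 * Suc k + t)) (M4 LO1) (M4 RHO) s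
                                            + wsum (\<lambda>t. M4 (32 + Suc r * Suc k + t)) (M4 LO2) (M4 LO2) s)"
    have fr: "\<And>a. a < 20 \<Longrightarrow> M' a = M4 a" using post by simp
    have keep: "\<forall>\<rho> s. \<rho> \<noteq> Suc r \<longrightarrow> s \<le> k \<longrightarrow> M' (32 + \<rho> * Suc k + s) = M4 (32 + \<rho> * Suc k + s)"
      using post by simp
    have new: "\<And>s. s \<le> k \<Longrightarrow> M' (32 + Suc r * Suc k + s) = wsum (\<lambda>t. M4 (32 + t)) r (Suc r) s"
      using post v4 by (simp add: wsum_empty)
    have r4: "rowv M4 \<rho> f \<longleftrightarrow> rowv M \<rho> f" for \<rho> f
      unfolding rowv_def M4 by simp
    show "II q M'"
      unfolding II_def
    proof (intro conjI allI impI)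
      show "base M'" using base_frame[OF b4 fr] .
      show "M' CN = q" "q \<le> j" "M' RHO = j - q" "M' P2 = 32 + (j - q) * Suc k" "M' P1 = 32"
      proof -
        have jq: "j - q = Suc r" using c unfolding r_def by simp
        show "M' CN = q" "q \<le> j" "M' RHO = j - q" "M' P2 = 32 + (j - q) * Suc k" "M' P1 = 32"
          unfolding jq using fr[of CN] fr[of RHO] fr[of P2] fr[of P1] c by (simp_all add: M4)
      qed
      show "rowv M' 0 (Gs (n0 - 1))" using rowv_keep[OF _ _ keep] r0 r4 by simp
    next
      fix \<rho> assume \<rho>: "1 \<le> \<rho> \<and> \<rho> \<le> j - q"
      show "rowv M' \<rho> (Fn n0 (\<rho> - 1) 0)"
      proof (cases "\<rho> = Suc r")
        case True
        show ?thesis unfolding rowv_def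
        proof (intro allI impI)
          fix s assume s: "s \<le> k"
          have "M' (32 + \<rho> * Suc k + s) = wsum (\<lambda>t. M4 (32 + t)) r (Suc r) s" using new[OF s] True by simp
          also have "\<dots> = wsum (Gs (n0 - 1)) r (Suc r) s"
          proof (rule wsum_cong)
            fix t assume "t \<le> s"
            then show "M4 (32 + t) = Gs (n0 - 1) t" using r0 s unfolding rowv_def by (simp add: M4)
          qed
          also have "\<dots> = Fn n0 (\<rho> - 1) 0 s" using True by simp
          finally show "M' (32 + \<rho> * Suc k + s) = Fn n0 (\<rho> - 1) 0 s" .
        qed
      next
        case False
        then have "\<rho> \<le> r" using \<rho> c unfolding r_def by auto
        then have "rowv M \<rho> (Fn n0 (\<rho> - 1) 0)" using rs \<rho> by simp
        then show ?thesis using rowv_keep[OF _ False keep] r4 by simp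
      qed
    qed
  qed
qed


definition IR :: "nat \<Rightarrow> nat \<Rightarrow> nat \<Rightarrow> (nat \<Rightarrow> nat) \<Rightarrow> bool" where
  "IR c t r M \<longleftrightarrow> base M \<and> M CN = c \<and> Suc (n0 + t) \<le> m \<and> M NN = Suc (n0 + t) \<and> M PT = 32 + j * Suc k
     \<and> M LO1 = 0 \<and> M RHO = r \<and> r \<le> j \<and> M P2 = 32 + r * Suc k \<and> rowv M 0 (Gs (n0 - 1))
     \<and> (\<forall>\<rho>. 1 \<le> \<rho> \<and> \<rho> \<le> j \<longrightarrow> rowv M \<rho> (if r < \<rho> then Fn (Suc (n0 + t)) (\<rho> - 1) (Suc t) else Fn (n0 + t) (\<rho> - 1) t))"

lemma FIN_body:
  assumes "IR c t (Suc r) M"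
  shows "ex FIN M (IR c t r) (Suc (Suc (RB + Suc 1)))"
proof -
  have b: "base M" and c: "M CN = c" "Suc (n0 + t) \<le> m" "M NN = Suc (n0 + t)" "M PT = 32 + j * Suc k"
     "M LO1 = 0" "M RHO = Suc r" "Suc r \<le> j" "M P2 = 32 + Suc r * Suc k"
    and r0: "rowv M 0 (Gs (n0 - 1))"
    and rs: "\<And>\<rho>. 1 \<le> \<rho> \<Longrightarrow> \<rho> \<le> j \<Longrightarrow> rowv M \<rho> (if Suc r < \<rho> then Fn (Suc (n0 + t)) (\<rho> - 1) (Suc t) else Fn (n0 + t) (\<rho> - 1) t)"
    using assms unfolding IR_def by auto
  define M2 where "M2 = upd (Sub HI1 RHO ONE) (upd (Sub P1 P2 rW) M)"
  have M2: "M2 = M(P1 := 32 + r * Suc k, HI1 := r)"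
    using b c unfolding M2_def base_def by simp
  have b2: "base M2" unfolding M2 using b by (simp add: base_def)
  have v2: "M2 P1 = 32 + r * Suc k" "M2 P2 = 32 + Suc r * Suc k" "M2 RHO = Suc r" "M2 LO1 = 0" "M2 HI1 = r"
    "M2 NN = Suc (n0 + t)"
    using c by (simp_all add: M2)
  have r2: "rowv M2 \<rho> f \<longleftrightarrow> rowv M \<rho> f" for \<rho> f
    unfolding rowv_def M2 by simp
  have rw: "ex (ROW P1 LO1 HI1 P2 RHO NN) M2 (\<lambda>M'. (\<forall>a<20. M' a = M2 a)
     \<and> (\<forall>\<rho> s. \<rho> \<noteq> Suc r \<longrightarrow> s \<le> k \<longrightarrow> M' (32 + \<rho> * Suc k + s) = M2 (32 + \<rho> * Suc k + s))
     \<and> (\<forall>s \<le> k. M' (32 + Suc r * Suc k + s) = wsum (\<lambda>t. M2 (32 + r * Suc k + t)) (M2 LO1) (M2 HI1) s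
                                            + wsum (\<lambda>t. M2 (32 + Suc r * Suc k + t)) (M2 RHO) (M2 NN) s)) RB"
    by (rule ROW_tab[OF b2]) (use v2 c jr in simp_all)
  show ?thesis unfolding FIN_def
  proof (rule ex_SeqCI, rule ex_SeqCI, fold M2_def, rule ex_Seq[OF rw], rule ex_SeqCI, rule ex_CI)
    fix M' assume post: "(\<forall>a<20. M' a = M2 a)
     \<and> (\<forall>\<rho> s. \<rho> \<noteq> Suc r \<longrightarrow> s \<le> k \<longrightarrow> M' (32 + \<rho> * Suc k + s) = M2 (32 + \<rho> * Suc k + s))
     \<and> (\<forall>s \<le> k. M' (32 + Suc r * Suc k + s) = wsum (\<lambda>t. M2 (32 + r * Suc k + t)) (M2 LO1) (M2 HI1) s
                                            + wsum (\<lambda>t. M2 (32 + Suc r * Suc k + t)) (M2 RHO) (M2 NN) s)"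
    have fr: "\<And>a. a < 20 \<Longrightarrow> M' a = M2 a" using post by simp
    have keep: "\<forall>\<rho> s. \<rho> \<noteq> Suc r \<longrightarrow> s \<le> k \<longrightarrow> M' (32 + \<rho> * Suc k + s) = M2 (32 + \<rho> * Suc k + s)"
      using post by simp
    have new: "\<And>s. s \<le> k \<Longrightarrow> M' (32 + Suc r * Suc k + s) = wsum (\<lambda>t. M2 (32 + r * Suc k + t)) 0 r s
                                            + wsum (\<lambda>t. M2 (32 + Suc r * Suc k + t)) (Suc r) (Suc (n0 + t)) s"
      using post v2 by simp
    define M5 where "M5 = upd (Add P2 P1 LO2) (upd (Sub RHO RHO ONE) M')"
    have b': "base M'" using base_frame[OF b2 fr] .
    have M5: "M5 = M'(RHO := r, P2 := 32 + r * Suc k)"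
      unfolding M5_def using fr[of RHO] fr[of P1] fr[of LO2] fr[of ONE] v2 b2 unfolding base_def by simp
    have r5: "rowv M5 \<rho> f \<longleftrightarrow> rowv M' \<rho> f" for \<rho> f
      unfolding rowv_def M5 by simp
    show "IR c t r M5"
      unfolding IR_def
    proof (intro conjI allI impI)
      show "base M5" unfolding M5 using b' by (simp add: base_def)
      show "M5 CN = c" "Suc (n0 + t) \<le> m" "M5 NN = Suc (n0 + t)" "M5 PT = 32 + j * Suc k"
        "M5 LO1 = 0" "M5 RHO = r" "r \<le> j" "M5 P2 = 32 + r * Suc k"
        unfolding M5 using fr[of CN] fr[of NN] fr[of PT] fr[of LO1] c by (simp_all add: M2)
      show "rowv M5 0 (Gs (n0 - 1))" unfolding r5 using rowv_keep[OF _ _ keep] r0 r2 by simp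
    next
      fix \<rho> assume \<rho>: "1 \<le> \<rho> \<and> \<rho> \<le> j"
      show "rowv M5 \<rho> (if r < \<rho> then Fn (Suc (n0 + t)) (\<rho> - 1) (Suc t) else Fn (n0 + t) (\<rho> - 1) t)"
        unfolding r5
      proof (cases "\<rho> = Suc r")
        case True
        show "rowv M' \<rho> (if r < \<rho> then Fn (Suc (n0 + t)) (\<rho> - 1) (Suc t) else Fn (n0 + t) (\<rho> - 1) t)"
          unfolding rowv_def
        proof (intro allI impI)
          fix s assume s: "s \<le> k"
          have rowr: "wsum (\<lambda>t. M2 (32 + r * Suc k + t)) 0 r s = wsum (Fn (n0 + t) (r - 1) t) 0 r s"
          proof (cases r)
            case 0
            then show ?thesis by (simp add: wsum_empty)
          next
            case (Suc r')
            have rr: "rowv M r (Fn (n0 + t) (r - 1) t)" using rs[of r] Suc c by simp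
            show ?thesis
            proof (rule wsum_cong)
              fix u assume "u \<le> s"
              then show "M2 (32 + r * Suc k + u) = Fn (n0 + t) (r - 1) t u"
                using rr s unfolding rowv_def by (auto simp: M2)
            qed
          qed
          have rowr1: "wsum (\<lambda>t. M2 (32 + Suc r * Suc k + t)) (Suc r) (Suc (n0 + t)) s
              = wsum (Fn (n0 + t) r t) (Suc r) (Suc (n0 + t)) s"
          proof (rule wsum_cong)
            have rr: "rowv M (Suc r) (Fn (n0 + t) r t)" using rs[of "Suc r"] c by simp
            fix u assume "u \<le> s"
            then show "M2 (32 + Suc r * Suc k + u) = Fn (n0 + t) r t u"
              using rr s unfolding rowv_def by (auto simp: M2)
          qed
          have "M' (32 + \<rho> * Suc k + s) = wsum (Fn (n0 + t) (r - 1) t) 0 r s + wsum (Fn (n0 + t) r t) (Suc r) (Suc (n0 + t)) s"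
            using new[OF s] rowr rowr1 True by simp
          also have "\<dots> = Fn (Suc (n0 + t)) r (Suc t) s" by simp
          finally show "M' (32 + \<rho> * Suc k + s) = (if r < \<rho> then Fn (Suc (n0 + t)) (\<rho> - 1) (Suc t) else Fn (n0 + t) (\<rho> - 1) t) s"
            using True by simp
        qed
      next
        case False
        have "rowv M \<rho> (if Suc r < \<rho> then Fn (Suc (n0 + t)) (\<rho> - 1) (Suc t) else Fn (n0 + t) (\<rho> - 1) t)"
          using rs \<rho> by simp
        moreover have "(if Suc r < \<rho> then Fn (Suc (n0 + t)) (\<rho> - 1) (Suc t) else Fn (n0 + t) (\<rho> - 1) t)
           = (if r < \<rho> then Fn (Suc (n0 + t)) (\<rho> - 1) (Suc t) else Fn (n0 + t) (\<rho> - 1) t)"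
          using False by auto
        ultimately show "rowv M' \<rho> (if r < \<rho> then Fn (Suc (n0 + t)) (\<rho> - 1) (Suc t) else Fn (n0 + t) (\<rho> - 1) t)"
          using rowv_keep[OF _ False keep] r2 by simp
      qed
    qed
  qed
qed


definition IF :: "nat \<Rightarrow> (nat \<Rightarrow> nat) \<Rightarrow> bool" where
  "IF q M \<longleftrightarrow> base M \<and> M CN = q \<and> q \<le> m - n0 \<and> M NN = n0 + (m - n0 - q) \<and> M PT = 32 + j * Suc k
     \<and> M LO1 = 0 \<and> rowv M 0 (Gs (n0 - 1))
     \<and> (\<forall>\<rho>. 1 \<le> \<rho> \<and> \<rho> \<le> j \<longrightarrow> rowv M \<rho> (Fn (n0 + (m - n0 - q)) (\<rho> - 1) (m - n0 - q)))"

lemma n0_le: "n0 \<le> m" "1 \<le> n0" using ir by auto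

lemma F_body:
  assumes "IF (Suc q) M"
  shows "ex FBODY M (IF q) (Suc (Suc (Suc (Suc (j * (Suc (Suc (RB + Suc 1)) + 2) + 1)))))"
proof -
  define t where "t = m - n0 - Suc q"
  have b: "base M" and c: "M CN = Suc q" "Suc q \<le> m - n0" "M NN = n0 + t" "M PT = 32 + j * Suc k"
     "M LO1 = 0" and r0: "rowv M 0 (Gs (n0 - 1))"
    and rs: "\<And>\<rho>. 1 \<le> \<rho> \<Longrightarrow> \<rho> \<le> j \<Longrightarrow> rowv M \<rho> (Fn (n0 + t) (\<rho> - 1) t)"
    using assms unfolding IF_def t_def by auto
  have tq: "m - n0 - q = Suc t" using c unfolding t_def by simp
  define M4 where "M4 = upd (Add P2 PT LO2) (upd (Add RHO rJ LO2) (upd (Add NN NN ONE) (upd (Sub CN CN ONE) M)))"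
  have M4: "M4 = M(CN := q, NN := Suc (n0 + t), RHO := j, P2 := 32 + j * Suc k)"
    using b c unfolding M4_def base_def by simp
  have r4: "rowv M4 \<rho> f \<longleftrightarrow> rowv M \<rho> f" for \<rho> f
    unfolding rowv_def M4 by simp
  have st: "IR q t j M4"
    unfolding IR_def
  proof (intro conjI allI impI)
    show "base M4" unfolding M4 using b by (simp add: base_def)
    show "Suc (n0 + t) \<le> m" using c n0_le unfolding t_def by simp
  next
    fix \<rho> assume "1 \<le> \<rho> \<and> \<rho> \<le> j"
    then show "rowv M4 \<rho> (if j < \<rho> then Fn (Suc (n0 + t)) (\<rho> - 1) (Suc t) else Fn (n0 + t) (\<rho> - 1) t)"
      using rs r4 by simp
  qed (use c r0 r4 in \<open>simp_all add: M4\<close>)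
  have cond: "M' RHO = 0 \<longleftrightarrow> r = 0" if "IR q t r M'" for r M'
    using that unfolding IR_def by auto
  have w: "ex (While RHO FIN) M4 (IR q t 0) (j * (Suc (Suc (RB + Suc 1)) + 2) + 1)"
    by (rule ex_While[where I = "IR q t", OF FIN_body cond st])
  show ?thesis unfolding FBODY_def
  proof (rule ex_SeqCI, rule ex_SeqCI, rule ex_SeqCI, rule ex_SeqCI, fold M4_def, rule ex_post[OF w])
    fix M' assume "IR q t 0 M'"
    then show "IF q M'" unfolding IF_def IR_def using tq c by auto
  qed
qed


definition M0 :: "nat \<Rightarrow> nat" where
  "M0 = (\<lambda>_. 0)(0 := m, 1 := k, 2 := j, 3 := i)"

lemma bound_poly:
  fixes X R :: nat
  assumes X: "1 \<le> X" and R: "R = 2 + X * X * (22 + 12 * X)"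
  shows "24 + X * (R + 4) + X * (R + 6) + X * (X * (R + 6) + 7) \<le> 200 * X ^ 5"
proof -
  have e: "24 + X * (R + 4) + X * (R + 6) + X * (X * (R + 6) + 7) = 24 + 21*X + 8*X^2 + 44*X^3 + 46*X^4 + 12*X^5"
    unfolding R by (simp add: algebra_simps eval_nat_numeral)
  have p: "X^0 \<le> X^5" "X^1 \<le> X^5" "X^2 \<le> X^5" "X^3 \<le> X^5" "X^4 \<le> X^5"
    using X by (simp_all only: power_increasing)
  then have p: "1 \<le> X^5" "X \<le> X^5" "X^2 \<le> X^5" "X^3 \<le> X^5" "X^4 \<le> X^5" by simp_all
  show ?thesis unfolding e using p by linarith
qed

lemma main_ex: "ex MAIN M0 (\<lambda>M'. M' rM = Fn m (j - 1) (i - 1) k) (200 * Suc m ^ 5)"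
proof -
  define MS where "MS = upd (Const NN 0) (upd (Sub CN N0 ONE) (upd (Sub N0 N0 rI) (upd (Add N0 rM ONE)
    (upd (Const LO2 0) (upd (Const HI1 0) (upd (Const LO1 0) (upd (Add P1 P2 rW) (upd (Store P2 ONE)
    (upd (Const P2 32) (upd (Add rW rK ONE) (upd (Const ONE 1) M0)))))))))))"
  have MS: "MS = M0(ONE := 1, rW := Suc k, P2 := 32, 32 := 1, P1 := 32 + Suc k, LO1 := 0, HI1 := 0, LO2 := 0,
      N0 := n0, CN := n0 - 1, NN := 0)"
    unfolding MS_def M0_def by (simp add: fun_upd_twist)
  have stG: "IG (n0 - 1) MS"
    unfolding IG_def
  proof (intro conjI)
    show "base MS" unfolding base_def MS M0_def by simp
    show "rowv MS 0 (Gs (MS NN))" unfolding rowv_def MS M0_def by auto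
  qed (simp_all add: MS)
  have condG: "M' CN = 0 \<longleftrightarrow> q = 0" if "IG q M'" for q M' using that unfolding IG_def by auto
  have eG: "ex (While CN GBODY) MS (IG 0) ((n0 - 1) * (Suc (Suc RB) + 2) + 1)"
    by (rule ex_While[where I = IG, OF G_body condG stG])
  have condI: "M' CN = 0 \<longleftrightarrow> q = 0" if "II q M'" for q M' using that unfolding II_def by auto
  have condF: "M' CN = 0 \<longleftrightarrow> q = 0" if "IF q M'" for q M' using that unfolding IF_def by auto
  define BI where "BI = j * (Suc (Suc (Suc (Suc RB))) + 2) + 1"
  define BF where "BF = (m - n0) * (Suc (Suc (Suc (Suc (j * (Suc (Suc (RB + Suc 1)) + 2) + 1)))) + 2) + 1"
  have out: "ex (CI (Add TMP PT rK) ;; CI (Load rM TMP)) M1 (\<lambda>M'. M' rM = Fn m (j - 1) (i - 1) k) (Suc 1)"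
    if "IF 0 M1" for M1
  proof (rule ex_SeqCI, rule ex_CI)
    have b: "base M1" and pt: "M1 PT = 32 + j * Suc k"
      and rs: "rowv M1 j (Fn (n0 + (m - n0)) (j - 1) (m - n0))"
      using that jr unfolding IF_def by auto
    have "n0 + (m - n0) = m" "m - n0 = i - 1" using n0_le ir by auto
    then have "M1 (32 + j * Suc k + k) = Fn m (j - 1) (i - 1) k" using rs unfolding rowv_def by simp
    then show "upd (Load rM TMP) (upd (Add TMP PT rK) M1) rM = Fn m (j - 1) (i - 1) k"
      using b pt unfolding base_def by simp
  qed
  have phF: "ex (CI (Add NN N0 LO2) ;; CI (Add PT P2 LO2) ;; CI (Sub CN rM N0) ;; CI (Const LO1 0) ;;
     While CN FBODY ;; CI (Add TMP PT rK) ;; CI (Load rM TMP)) M1 (\<lambda>M'. M' rM = Fn m (j - 1) (i - 1) k)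
     (Suc (Suc (Suc (Suc (BF + Suc 1)))))" if "II 0 M1" for M1
  proof -
    define MF where "MF = upd (Const LO1 0) (upd (Sub CN rM N0) (upd (Add PT P2 LO2) (upd (Add NN N0 LO2) M1)))"
    have b: "base M1" and c: "M1 RHO = j" "M1 P2 = 32 + j * Suc k" and r0: "rowv M1 0 (Gs (n0 - 1))"
      and rs: "\<And>\<rho>. 1 \<le> \<rho> \<Longrightarrow> \<rho> \<le> j \<Longrightarrow> rowv M1 \<rho> (Fn n0 (\<rho> - 1) 0)"
      using that unfolding II_def by auto
    have MF: "MF = M1(NN := n0, PT := 32 + j * Suc k, CN := m - n0, LO1 := 0)"
      unfolding MF_def using b c unfolding base_def by simp
    have rF: "rowv MF \<rho> f \<longleftrightarrow> rowv M1 \<rho> f" for \<rho> f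
      unfolding rowv_def MF by simp
    have st: "IF (m - n0) MF" unfolding IF_def
      using b r0 rs rF by (auto simp: MF base_def)
    have eF: "ex (While CN FBODY) MF (IF 0) BF"
      unfolding BF_def by (rule ex_While[where I = IF, OF F_body condF st])
    show ?thesis
      by (rule ex_SeqCI, rule ex_SeqCI, rule ex_SeqCI, rule ex_SeqCI, fold MF_def, rule ex_Seq[OF eF out])
  qed
  have phI: "ex (CI (Const P1 32) ;; CI (Const RHO 0) ;; CI (Add CN rJ LO2) ;; While CN IBODY ;;
     CI (Add NN N0 LO2) ;; CI (Add PT P2 LO2) ;; CI (Sub CN rM N0) ;; CI (Const LO1 0) ;;
     While CN FBODY ;; CI (Add TMP PT rK) ;; CI (Load rM TMP)) M1 (\<lambda>M'. M' rM = Fn m (j - 1) (i - 1) k)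
     (Suc (Suc (Suc (BI + Suc (Suc (Suc (Suc (BF + Suc 1))))))))" if "IG 0 M1" for M1
  proof -
    define MI where "MI = upd (Add CN rJ LO2) (upd (Const RHO 0) (upd (Const P1 32) M1))"
    have b: "base M1" and c: "M1 P2 = 32" "M1 NN = n0 - 1" and r0: "rowv M1 0 (Gs (n0 - 1))"
      using that unfolding IG_def by auto
    have MI: "MI = M1(P1 := 32, RHO := 0, CN := j)"
      unfolding MI_def using b unfolding base_def by simp
    have rI: "rowv MI \<rho> f \<longleftrightarrow> rowv M1 \<rho> f" for \<rho> f
      unfolding rowv_def MI by simp
    have st: "II j MI" unfolding II_def
      using b r0 rI c by (auto simp: MI base_def)
    have eI: "ex (While CN IBODY) MI (II 0) BI"
      unfolding BI_def by (rule ex_While[where I = II, OF I_body condI st])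
    show ?thesis
      by (rule ex_SeqCI, rule ex_SeqCI, rule ex_SeqCI, fold MI_def, rule ex_Seq[OF eI phF])
  qed
  have e: "ex MAIN M0 (\<lambda>M'. M' rM = Fn m (j - 1) (i - 1) k)
     (Suc (Suc (Suc (Suc (Suc (Suc (Suc (Suc (Suc (Suc (Suc (Suc (((n0 - 1) * (Suc (Suc RB) + 2) + 1) + Suc (Suc (Suc (BI + Suc (Suc (Suc (Suc (BF + Suc 1))))))))))))))))))))"
    unfolding MAIN_def
    by ((rule ex_SeqCI)+, fold MS_def, rule ex_Seq[OF eG phI])
  have le1: "n0 - 1 \<le> Suc m" "j \<le> Suc m" "m - n0 \<le> Suc m" using jr by auto
  have b1: "(n0 - 1) * (Suc (Suc RB) + 2) \<le> Suc m * (RB + 4)"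
    using le1 by (intro mult_mono) auto
  have b2a: "j * (Suc (Suc (Suc (Suc RB))) + 2) \<le> Suc m * (RB + 6)"
    using le1 by (intro mult_mono) auto
  have b2: "BI \<le> Suc m * (RB + 6) + 1" unfolding BI_def using b2a by simp
  have b3a: "j * (Suc (Suc (RB + Suc 1)) + 2) \<le> Suc m * (RB + 6)"
    using le1 by (intro mult_mono) auto
  have b3b: "(m - n0) * (Suc (Suc (Suc (Suc (j * (Suc (Suc (RB + Suc 1)) + 2) + 1)))) + 2)
      \<le> Suc m * (Suc m * (RB + 6) + 7)"
    using le1 b3a by (intro mult_mono) auto
  have b3: "BF \<le> Suc m * (Suc m * (RB + 6) + 7) + 1" unfolding BF_def using b3b by simp
  have fin: "24 + Suc m * (RB + 4) + Suc m * (RB + 6) + Suc m * (Suc m * (RB + 6) + 7) \<le> 200 * Suc m ^ 5"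
    by (rule bound_poly) auto
  show ?thesis
    by (rule ex_weaken[OF e]) (use b1 b2 b3 fin in linarith)
qed

end

lemma run_halted: "halted P c \<Longrightarrow> run P n c = c"
proof (induction n)
  case 0
  then show ?case unfolding run_def by simp
next
  case (Suc n)
  have "run P (Suc n) c = step P (run P n c)" unfolding run_def by simp
  then show ?case using Suc unfolding step_def by simp
qed

lemma wfc_MAIN: "wfc MAIN"
  by (simp add: MAIN_def GBODY_def IBODY_def FBODY_def FIN_def ROW_def RBODY_def WSUM_def WBODY_def)

lemma lemma2_aux:
  fixes m k j i :: nat
  assumes h: "1 \<le> m" "k \<le> m * (m - 1) div 2" "j \<in> {1..m}" "i \<in> {1..m}"
  shows "let cf = run (comp 0 MAIN @ [Halt]) (200 * (m + 1) ^ 5) (init4 m k j i)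
         in halted (comp 0 MAIN @ [Halt]) cf \<and> snd cf 0 = T m k j i"
proof -
  interpret ctx m k j i using h by unfold_locales
  let ?P = "comp 0 MAIN @ [Halt]"
  obtain M' t where bs: "bs MAIN M0 M' t" and out: "M' rM = Fn m (j - 1) (i - 1) k" and tb: "t \<le> 200 * Suc m ^ 5"
    using main_ex unfolding ex_def by blast
  have ca: "code_at ?P 0 MAIN" unfolding code_at_def by (simp add: nth_append)
  have r1: "run ?P t (0, M0) = (len MAIN, M')"
    using comp_correct[OF bs wfc_MAIN ca] by simp
  have hl: "halted ?P (len MAIN, M')" unfolding halted_def by (simp add: nth_append)
  have i4: "init4 m k j i = (0, M0)" unfolding init4_def M0_def by simp
  have N: "200 * (m + 1) ^ 5 = t + (200 * (m + 1) ^ 5 - t)" using tb by simp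
  have "run ?P (200 * (m + 1) ^ 5) (init4 m k j i) = (len MAIN, M')"
    unfolding i4 by (subst N, subst run_add) (simp add: r1 run_halted[OF hl])
  then show ?thesis
    using hl out T_eq[OF h(3) h(4), of k] by simp
qed

theorem lemma2:
  shows "\<exists>(P :: instr list) (c :: nat) (d :: nat).
           \<forall>m k j i. 1 \<le> m \<longrightarrow> k \<le> m * (m - 1) div 2 \<longrightarrow> j \<in> {1..m} \<longrightarrow> i \<in> {1..m} \<longrightarrow>
             (let cf = run P (c * (m + 1) ^ d) (init4 m k j i)
              in halted P cf \<and> snd cf 0 = T m k j i)"
  using lemma2_aux by blast


end
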